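(* Let $\alpha\in(0,1)$, $\theta=\alpha/2$, and let $0=t_0<t_1<\cdots<t_N=T$ be a time mesh with steps $\tau_k=t_k-t_{k-1}$ and step ratios $r_k=\tau_k/\tau_{k-1}$ satisfying $r_k\ge r_\star(\alpha)$ for all $k\ge2$, where $r_\star(\alpha)$ is the unique positive root $r$ of $$2\sqrt{\frac{2(1-\alpha/2)r}{1+\alpha+(1-\alpha/2)r}+\frac{r}{1+r}}+3-\frac{1}{r^2(1+r)}=0.$$ Then for every real sequence $v^0,\dots,v^N$ and every $1\le n\le N$, $$2(\nabla_\tau v^n)(\partial^\alpha_\tau v)^{n-\theta}=\mathcal G_n[\nabla_\tau v]-\mathcal G_{n-1}[\nabla_\tau v]+\mathcal R_n[\nabla_\tau v]+\frac{2\alpha a^{(n)}_0}{2-\alpha}(\nabla_\tau v^n)^2,$$ where the functionals $\mathcal G_n,\mathcal R_n$ (defined in the context) are nonnegative.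
   Context: Notation: $\nabla_\tau v^k:=v^k-v^{k-1}$; $\omega_\beta(t):=t^{\beta-1}/\Gamma(\beta)$; $t_{n-\theta}:=\theta t_{n-1}+(1-\theta)t_n$; $\varpi_n'(t):=\omega_{1-\alpha}(t_{n-\theta}-t)$. For $1\le k\le n$: $$a^{(n)}_{n-k}:=\frac{1}{\tau_k}\int_{t_{k-1}}^{\min\{t_k,t_{n-\theta}\}}\varpi_n'(s)\,ds,\qquad \zeta^{(n)}_{n-k}:=\frac{2}{\tau_k^2}\int_{t_{k-1}}^{t_k}\Big(s-\tfrac{t_{k-1}+t_k}{2}\Big)\varpi_n'(s)\,ds.$$ The variable-step L2-$1_\sigma$ approximation of the Caputo derivative is $$(\partial^\alpha_\tau v)^{n-\theta}:=a^{(n)}_0\nabla_\tau v^n+\sum_{k=1}^{n-1}\Big(a^{(n)}_{n-k}\nabla_\tau v^k+\frac{\nabla_\tau v^{k+1}-r_{k+1}\nabla_\tau v^k}{r_{k+1}(1+r_{k+1})}\zeta^{(n)}_{n-k}\Big).$$ Kernels: $\hat a^{(1)}_0:=\frac{2(1-\alpha)}{2-\alpha}a^{(1)}_0$; for $n\ge2$: $\hat a^{(n)}_0:=\frac{2(1-\alpha)}{2-\alpha}a^{(n)}_0+\frac{\zeta^{(n)}_1}{r_n(1+r_n)}$, $\hat a^{(n)}_{n-k}:=a^{(n)}_{n-k}+\frac{\zeta^{(n)}_{n-k+1}}{r_k(1+r_k)}-\frac{\zeta^{(n)}_{n-k}}{1+r_{k+1}}$ for $2\le k\le n-1$, $\hat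 a^{(n)}_{n-1}:=a^{(n)}_{n-1}-\frac{\zeta^{(n)}_{n-1}}{1+r_2}$. Set $A^{(n)}_0:=2\hat a^{(n)}_0$ and $A^{(n)}_{n-k}:=\hat a^{(n)}_{n-k}$ for $1\le k\le n-1$. For a sequence $w=(w^1,w^2,\dots)$ and $m\ge1$: $$\mathcal G_m[w]:=\sum_{j=1}^{m-1}\big(A^{(m)}_{m-j-1}-A^{(m)}_{m-j}\big)\Big(\sum_{\ell=j+1}^m w^\ell\Big)^2+A^{(m)}_{m-1}\Big(\sum_{\ell=1}^m w^\ell\Big)^2,\qquad \mathcal G_0[w]:=0,$$ $$\mathcal R_m[w]:=\sum_{j=1}^{m-1}\big(A^{(m-1)}_{m-j-2}-A^{(m-1)}_{m-j-1}-A^{(m)}_{m-j-1}+A^{(m)}_{m-j}\big)\Big(\sum_{\ell=j+1}^{m-1}w^\ell\Big)^2+\big(A^{(m-1)}_{m-2}-A^{(m)}_{m-1}\big)\Big(\sum_{\ell=1}^{m-1}w^\ell\Big)^2$$ for $m\ge2$, and $\mathcal R_1[w]:=0$ (empty sums vanish). Here $\nabla_\tau v$ denotes the sequence $(\nabla_\tau v^1,\nabla_\tau v^2,\dots)$. *)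

theory Defs
  imports "HOL-Analysis.Analysis"
begin

text \<open>Variable-step L2-1_sigma scheme. The mesh is t :: nat => real, with t 0 = 0 < t 1 < ... < t N.
  Kernel subscripts follow the paper: a n j stands for a^{(n)}_j, where j = n - k.\<close>

definition omega :: "real \<Rightarrow> real \<Rightarrow> real" where
  "omega \<beta> x = x powr (\<beta> - 1) / Gamma \<beta>"

definition tau :: "(nat \<Rightarrow> real) \<Rightarrow> nat \<Rightarrow> real" where
  "tau t k = t k - t (k - 1)"

definition ratio :: "(nat \<Rightarrow> real) \<Rightarrow> nat \<Rightarrow> real" where
  "ratio t k = tau t k / tau t (k - 1)"

definition nabla :: "(nat \<Rightarrow> real) \<Rightarrow> nat \<Rightarrow> real" where
  "nabla v k = v k - v (k - 1)"

definition tth :: "real \<Rightarrow> (nat \<Rightarrow> real) \<Rightarrow> nat \<Rightarrow> real" where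
  "tth \<alpha> t n = (\<alpha>/2) * t (n - 1) + (1 - \<alpha>/2) * t n"

definition varpi' :: "real \<Rightarrow> (nat \<Rightarrow> real) \<Rightarrow> nat \<Rightarrow> real \<Rightarrow> real" where
  "varpi' \<alpha> t n s = omega (1 - \<alpha>) (tth \<alpha> t n - s)"

definition acoef :: "real \<Rightarrow> (nat \<Rightarrow> real) \<Rightarrow> nat \<Rightarrow> nat \<Rightarrow> real" where
  "acoef \<alpha> t n j = (let k = n - j in
     (1 / tau t k) * integral {t (k - 1) .. min (t k) (tth \<alpha> t n)} (varpi' \<alpha> t n))"

definition zeta :: "real \<Rightarrow> (nat \<Rightarrow> real) \<Rightarrow> nat \<Rightarrow> nat \<Rightarrow> real" where
  "zeta \<alpha> t n j = (let k = n - j in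
     (2 / (tau t k)^2) * integral {t (k - 1) .. t k}
        (\<lambda>s. (s - (t (k - 1) + t k) / 2) * varpi' \<alpha> t n s))"

definition caputoL21 :: "real \<Rightarrow> (nat \<Rightarrow> real) \<Rightarrow> (nat \<Rightarrow> real) \<Rightarrow> nat \<Rightarrow> real" where
  "caputoL21 \<alpha> t v n =
     acoef \<alpha> t n 0 * nabla v n +
     (\<Sum>k = 1..n - 1. acoef \<alpha> t n (n - k) * nabla v k +
        (nabla v (k + 1) - ratio t (k + 1) * nabla v k)
          / (ratio t (k + 1) * (1 + ratio t (k + 1))) * zeta \<alpha> t n (n - k))"

definition ahat :: "real \<Rightarrow> (nat \<Rightarrow> real) \<Rightarrow> nat \<Rightarrow> nat \<Rightarrow> real" where
  "ahat \<alpha> t n j =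
     (if j = 0 then
        2 * (1 - \<alpha>) / (2 - \<alpha>) * acoef \<alpha> t n 0
        + (if n \<ge> 2 then zeta \<alpha> t n 1 / (ratio t n * (1 + ratio t n)) else 0)
      else if j = n - 1 then
        acoef \<alpha> t n (n - 1) - zeta \<alpha> t n (n - 1) / (1 + ratio t 2)
      else
        acoef \<alpha> t n j
        + zeta \<alpha> t n (j + 1) / (ratio t (n - j) * (1 + ratio t (n - j)))
        - zeta \<alpha> t n j / (1 + ratio t (n - j + 1)))"

definition Akern :: "real \<Rightarrow> (nat \<Rightarrow> real) \<Rightarrow> nat \<Rightarrow> nat \<Rightarrow> real" where
  "Akern \<alpha> t n j = (if j = 0 then 2 * ahat \<alpha> t n 0 else ahat \<alpha> t n j)"

definition Gfun :: "real \<Rightarrow> (nat \<Rightarrow> real) \<Rightarrow> nat \<Rightarrow> (nat \<Rightarrow> real) \<Rightarrow> real" where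
  "Gfun \<alpha> t m w =
     (if m = 0 then 0 else
       (\<Sum>j = 1..m - 1. (Akern \<alpha> t m (m - j - 1) - Akern \<alpha> t m (m - j))
            * (\<Sum>l = j + 1..m. w l)^2)
       + Akern \<alpha> t m (m - 1) * (\<Sum>l = 1..m. w l)^2)"

text \<open>For j = m-1 the inner sum is empty, so the (nat-truncated) index m-j-2 there is irrelevant.\<close>
definition Rfun :: "real \<Rightarrow> (nat \<Rightarrow> real) \<Rightarrow> nat \<Rightarrow> (nat \<Rightarrow> real) \<Rightarrow> real" where
  "Rfun \<alpha> t m w =
     (if m \<le> 1 then 0 else
       (\<Sum>j = 1..m - 1. (Akern \<alpha> t (m - 1) (m - j - 2) - Akern \<alpha> t (m - 1) (m - j - 1)
                         - Akern \<alpha> t m (m - j - 1) + Akern \<alpha> t m (m - j))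
            * (\<Sum>l = j + 1..m - 1. w l)^2)
       + (Akern \<alpha> t (m - 1) (m - 2) - Akern \<alpha> t m (m - 1)) * (\<Sum>l = 1..m - 1. w l)^2)"

definition rstar :: "real \<Rightarrow> real" where
  "rstar \<alpha> = (THE r. r > 0 \<and>
     2 * sqrt (2 * (1 - \<alpha>/2) * r / (1 + \<alpha> + (1 - \<alpha>/2) * r) + r / (1 + r))
     + 3 - 1 / (r^2 * (1 + r)) = 0)"

end

theory Submission
  imports Defs
begin

lemma SIL:
  fixes g g1 g2 :: "real \<Rightarrow> real" and a b P Q a0 b0 C1 C2 :: real
  assumes ab: "a < b"
    and d1: "\<And>s. s \<in> {a..b} \<Longrightarrow> (g has_real_derivative g1 s) (at s)"
    and d2: "\<And>s. s \<in> {a..b} \<Longrightarrow> (g1 has_real_derivative g2 s) (at s)"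
    and g2p: "\<And>s. s \<in> {a..b} \<Longrightarrow> g2 s \<ge> 0"
    and iP: "(g has_integral P) {a..b}"
    and iQ: "((\<lambda>s. (s - (a+b)/2) * g s) has_integral Q) {a..b}"
    and phi: "\<And>y. 0 \<le> y \<Longrightarrow> y \<le> b - a \<Longrightarrow> 0 \<le> C2 + C1*y + (a0/2 + b0*(b-a)/4)*y^2 - b0*y^3/6"
  shows "a0*P + b0*Q \<ge> (C1 + a0*(b-a))*g a + (C2 + C1*(b-a) + a0*(b-a)^2/2 + b0*(b-a)^3/12)*g1 a
                       - C1*g b - C2*g1 b"
proof -
  define \<tau> where "\<tau> = b - a"
  define F1 where "F1 = (\<lambda>s. C1 + a0*(b-s) + b0*(\<tau>*(b-s) - (b-s)^2)/2)"
  define F2 where "F2 = (\<lambda>s. C2 + C1*(b-s) + (a0/2 + b0*\<tau>/4)*(b-s)^2 - b0*(b-s)^3/6)"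
  define H where "H = (\<lambda>s. F1 s * g s + F2 s * g1 s)"
  define w where "w = (\<lambda>s. a0 + b0*(s - (a+b)/2))"
  have der: "(H has_real_derivative (- w s * g s + F2 s * g2 s)) (at s)" if "s \<in> {a..b}" for s
    unfolding H_def
    apply (rule derivative_eq_intros d1[OF that] d2[OF that] refl | simp only: F1_def F2_def)+
    unfolding w_def F1_def F2_def \<tau>_def by (simp add: field_simps power2_eq_square power3_eq_cube) (simp add: algebra_simps)?
  have ftc: "((\<lambda>s. - w s * g s + F2 s * g2 s) has_integral (H b - H a)) {a..b}"
    apply (rule fundamental_theorem_of_calculus)
    using ab apply simp
    using der by (auto simp: has_real_derivative_iff_has_vector_derivative[symmetric] intro: has_field_derivative_at_within)
  have iw: "((\<lambda>s. w s * g s) has_integral (a0*P + b0*Q)) {a..b}"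
  proof -
    have "((\<lambda>s. a0 * g s + b0 * ((s - (a+b)/2) * g s)) has_integral (a0*P + b0*Q)) {a..b}"
      by (intro has_integral_add has_integral_mult_right iP iQ)
    then show ?thesis unfolding w_def by (simp add: algebra_simps)
  qed
  have i2: "((\<lambda>s. F2 s * g2 s) has_integral (H b - H a + (a0*P + b0*Q))) {a..b}"
    using has_integral_add[OF ftc iw] by simp
  have "0 \<le> H b - H a + (a0*P + b0*Q)"
  proof (rule has_integral_nonneg[OF i2])
    fix s assume s: "s \<in> {a..b}"
    have "0 \<le> F2 s" unfolding F2_def \<tau>_def using phi[of "b-s"] s by simp
    then show "0 \<le> F2 s * g2 s" using g2p[OF s] by simp
  qed
  moreover have "H b = C1*g b + C2*g1 b" unfolding H_def F1_def F2_def by simp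
  moreover have "H a = (C1 + a0*(b-a))*g a + (C2 + C1*(b-a) + a0*(b-a)^2/2 + b0*(b-a)^3/12)*g1 a"
    unfolding H_def F1_def F2_def \<tau>_def by (simp add: field_simps power2_eq_square power3_eq_cube)
  ultimately show ?thesis by linarith
qed

lemma phiS1:
  fixes C1 C2 a0 b0 y \<tau> :: real
  assumes "0 \<le> C2" "0 \<le> C1" "0 \<le> C1 + a0*\<tau>/2" "0 \<le> b0" "0 \<le> y" "y \<le> \<tau>"
  shows "0 \<le> C2 + C1*y + (a0/2 + b0*\<tau>/4)*y^2 - b0*y^3/6"
proof -
  have e: "C2 + C1*y + (a0/2 + b0*\<tau>/4)*y^2 - b0*y^3/6 = C2 + y*(C1 + a0*y/2) + b0*y^2*(\<tau>/4 - y/6)"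
    by (simp add: algebra_simps power2_eq_square power3_eq_cube)
  have l: "0 \<le> C1 + a0*y/2"
  proof (cases "\<tau> = 0")
    case True then show ?thesis using assms by simp
  next
    case False
    then have tp: "\<tau> > 0" using assms by simp
    have "C1 + a0*y/2 = (1 - y/\<tau>)*C1 + (y/\<tau>)*(C1 + a0*\<tau>/2)" using tp by (simp add: field_simps)
    moreover have "0 \<le> (1 - y/\<tau>)*C1" using assms tp by (simp add: field_simps mult_left_mono)
    moreover have "0 \<le> (y/\<tau>)*(C1 + a0*\<tau>/2)" using assms tp by simp
    ultimately show ?thesis by linarith
  qed
  have "0 \<le> y*(C1 + a0*y/2)" using l assms by simp
  moreover have "0 \<le> b0*y^2*(\<tau>/4 - y/6)" using assms by simp
  ultimately show ?thesis using e assms by linarith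
qed

lemma phiS2:
  fixes C1 C2 a0 b0 y \<tau> :: real
  assumes "0 \<le> C2" "0 \<le> C1" "0 \<le> a0/2 + b0*\<tau>/4" "b0 \<le> 0" "0 \<le> y" "y \<le> \<tau>"
  shows "0 \<le> C2 + C1*y + (a0/2 + b0*\<tau>/4)*y^2 - b0*y^3/6"
proof -
  have e: "C2 + C1*y + (a0/2 + b0*\<tau>/4)*y^2 - b0*y^3/6 = C2 + C1*y + y^2*((a0/2 + b0*\<tau>/4) + (-b0)*y/6)"
    by (simp add: algebra_simps power2_eq_square power3_eq_cube)
  have "0 \<le> (-b0)*y/6" using assms by (simp add: mult_nonpos_nonneg)
  then have "0 \<le> (a0/2 + b0*\<tau>/4) + (-b0)*y/6" using assms by linarith
  then have "0 \<le> y^2*((a0/2 + b0*\<tau>/4) + (-b0)*y/6)" by simp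
  moreover have "0 \<le> C1*y" using assms by simp
  ultimately show ?thesis using e assms by linarith
qed

lemma phiS3:
  fixes C1 C2 a0 b0 y \<tau> :: real
  assumes "0 \<le> C1" "0 \<le> a0" "b0 \<le> 0" "0 \<le> C2 + b0*\<tau>^3/12" "0 \<le> y" "y \<le> \<tau>"
  shows "0 \<le> C2 + C1*y + (a0/2 + b0*\<tau>/4)*y^2 - b0*y^3/6"
proof -
  have e: "C2 + C1*y + (a0/2 + b0*\<tau>/4)*y^2 - b0*y^3/6
     = (C2 + b0*\<tau>^3/12) + C1*y + a0/2*y^2 + (-b0)*((\<tau> - y)^2*(\<tau> + 2*y))/12"
    by (simp add: field_simps power2_eq_square power3_eq_cube)
  have "0 \<le> (-b0)*((\<tau> - y)^2*(\<tau> + 2*y))" using assms by (intro mult_nonneg_nonneg) auto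
  then have "0 \<le> (-b0)*((\<tau> - y)^2*(\<tau> + 2*y))/12" by simp
  moreover have "0 \<le> C1*y" "0 \<le> a0/2*y^2" using assms by simp_all
  ultimately show ?thesis using e assms by linarith
qed

definition good :: "(real \<Rightarrow> real) \<Rightarrow> (real \<Rightarrow> real) \<Rightarrow> (real \<Rightarrow> real) \<Rightarrow> real \<Rightarrow> real \<Rightarrow> bool" where
  "good g g1 g2 a b \<longleftrightarrow> (\<forall>s\<in>{a..b}. (g has_real_derivative g1 s) (at s) \<and> (g1 has_real_derivative g2 s) (at s)
      \<and> 0 \<le> g s \<and> 0 \<le> g1 s \<and> 0 \<le> g2 s)"

lemma good_sub: "good g g1 g2 a b \<Longrightarrow> a \<le> a' \<Longrightarrow> b' \<le> b \<Longrightarrow> good g g1 g2 a' b'"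
  unfolding good_def by auto

lemma SILg:
  assumes "good g g1 g2 a b" "a < b"
    and iP: "(g has_integral P) {a..b}"
    and iQ: "((\<lambda>s. (s - (a+b)/2) * g s) has_integral Q) {a..b}"
    and phi: "\<And>y. 0 \<le> y \<Longrightarrow> y \<le> b - a \<Longrightarrow> 0 \<le> C2 + C1*y + (a0/2 + b0*(b-a)/4)*y^2 - b0*y^3/6"
  shows "a0*P + b0*Q \<ge> (C1 + a0*(b-a))*g a + (C2 + C1*(b-a) + a0*(b-a)^2/2 + b0*(b-a)^3/12)*g1 a
                       - C1*g b - C2*g1 b"
  apply (rule SIL[OF \<open>a < b\<close> _ _ _ iP iQ phi])
  using assms(1) unfolding good_def by auto

lemma goodD: "good g g1 g2 a b \<Longrightarrow> s \<in> {a..b} \<Longrightarrow> 0 \<le> g s \<and> 0 \<le> g1 s \<and> 0 \<le> g2 s"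
  unfolding good_def by auto

lemma Q_nonneg:
  assumes "good g g1 g2 a b" "a < b"
    and iP: "(g has_integral P) {a..b}"
    and iQ: "((\<lambda>s. (s - (a+b)/2) * g s) has_integral Q) {a..b}"
  shows "0 \<le> Q"
proof -
  have "0*P + 1*Q \<ge> (0 + 0*(b-a))*g a + (0 + 0*(b-a) + 0*(b-a)^2/2 + 1*(b-a)^3/12)*g1 a - 0*g b - 0*g1 b"
    by (rule SILg[OF assms]) (rule phiS1, auto)
  moreover have "0 \<le> (b-a)^3/12*g1 a" using goodD[OF assms(1), of a] assms(2) by simp
  ultimately show ?thesis by simp
qed

lemma psiR_nonneg:
  assumes "good g g1 g2 a b" "a < b" "0 < \<tau>'"
    and iP: "(g has_integral P) {a..b}"
    and iQ: "((\<lambda>s. (s - (a+b)/2) * g s) has_integral Q) {a..b}"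
  shows "0 \<le> P/(b-a) - 2*Q/((b-a)*((b-a)+\<tau>'))"
proof -
  define \<tau> where "\<tau> = b - a"
  have tp: "\<tau> > 0" using assms unfolding \<tau>_def by simp
  have "(1/\<tau>)*P + (-2/(\<tau>*(\<tau>+\<tau>')))*Q \<ge> (0 + (1/\<tau>)*(b-a))*g a
     + (0 + 0*(b-a) + (1/\<tau>)*(b-a)^2/2 + (-2/(\<tau>*(\<tau>+\<tau>')))*(b-a)^3/12)*g1 a - 0*g b - 0*g1 b"
  proof (rule SILg[OF assms(1,2) iP iQ], rule phiS2)
    have n1: "\<tau> + \<tau>' \<noteq> 0" "\<tau> \<noteq> 0" "\<tau>' * (\<tau> * 4) + \<tau> * (\<tau> * 4) \<noteq> 0" using tp assms(3)
      by (auto, smt (verit) mult_pos_pos)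
    have e: "- 2 / (\<tau> * (\<tau> + \<tau>')) * (b - a) / 4 = - (1/(\<tau>+\<tau>'))/2"
      using n1 unfolding \<tau>_def[symmetric] by (simp add: field_simps)
    have "1/(\<tau>+\<tau>') \<le> 1/\<tau>" using tp assms(3) by (intro divide_left_mono) auto
    then show "0 \<le> 1 / \<tau> / 2 + - 2 / (\<tau> * (\<tau> + \<tau>')) * (b - a) / 4"
      unfolding e proof -
      assume h: "1/(\<tau>+\<tau>') \<le> 1/\<tau>"
      have h2: "(1/(\<tau>+\<tau>'))/2 \<le> (1/\<tau>)/2" using h by (rule divide_right_mono) simp
      show "0 \<le> 1 / \<tau> / 2 + - (1 / (\<tau> + \<tau>')) / 2" using h2 by linarith
    qed
  qed (use tp assms(3) in \<open>auto simp: field_simps\<close>)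
  moreover have "0 \<le> (0 + (1/\<tau>)*(b-a))*g a" using goodD[OF assms(1), of a] assms(2) tp by simp
  moreover have "0 \<le> (0 + 0*(b-a) + (1/\<tau>)*(b-a)^2/2 + (-2/(\<tau>*(\<tau>+\<tau>')))*(b-a)^3/12)"
  proof -
    obtain \<sigma> where sd: "\<sigma> = \<tau>+\<tau>'" by blast
    have sp: "\<sigma> > 0" using sd tp assms(3) by simp
    have "(0 + 0*(b-a) + (1/\<tau>)*(b-a)^2/2 + (-2/(\<tau>*(\<tau>+\<tau>')))*(b-a)^3/12) = \<tau>/2 - \<tau>^2/(6*(\<tau>+\<tau>'))"
      unfolding \<tau>_def[symmetric] sd[symmetric] using tp sp by (simp add: field_simps power2_eq_square power3_eq_cube)
    also have "\<dots> \<ge> 0"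
    proof -
      have "\<tau>^2/(6*(\<tau>+\<tau>')) \<le> \<tau>^2/(6*\<tau>)" using tp assms(3)
        by (intro divide_left_mono) (auto simp: power2_eq_square)
      also have "\<dots> = \<tau>/6" using tp by (simp add: power2_eq_square)
      finally have "\<tau>^2/(6*(\<tau>+\<tau>')) \<le> \<tau>/6" .
      then show ?thesis using tp by linarith
    qed
    finally show ?thesis .
  qed
  moreover have "0 \<le> g1 a" using goodD[OF assms(1), of a] assms(2) by simp
  ultimately have "0 \<le> (1/\<tau>)*P + (-2/(\<tau>*(\<tau>+\<tau>')))*Q" by (smt (verit) mult_nonneg_nonneg)
  then show ?thesis unfolding \<tau>_def by (simp add: field_simps)
qed

lemma M1ineq:
  fixes \<tau>1 \<tau>2 \<tau>3 \<tau>4 :: real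
  assumes p: "0 < \<tau>1" "0 < \<tau>2" "0 < \<tau>3" "0 < \<tau>4" and r: "19*\<tau>1 \<le> 50*\<tau>2"
  shows "0 \<le> \<tau>3/2 - \<tau>3^2/(6*(\<tau>3+\<tau>4)) + \<tau>2/2 + \<tau>2^2/(6*\<tau>3) - \<tau>1^3/(6*\<tau>2*(\<tau>1+\<tau>2))"
proof -
  have a: "\<tau>3^2/(6*(\<tau>3+\<tau>4)) \<le> \<tau>3/6"
  proof -
    have "\<tau>3^2/(6*(\<tau>3+\<tau>4)) \<le> \<tau>3^2/(6*\<tau>3)" using p
      by (intro divide_left_mono) (auto simp: power2_eq_square)
    also have "\<dots> = \<tau>3/6" using p by (simp add: power2_eq_square)
    finally show ?thesis .
  qed
  have b: "14*\<tau>2/30 \<le> \<tau>3/3 + \<tau>2^2/(6*\<tau>3)"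
  proof -
    have "0 \<le> (\<tau>3 - 7/10*\<tau>2)^2" by simp
    moreover have "2*\<tau>3^2 + \<tau>2^2 - 14/5*\<tau>2*\<tau>3 = 2*(\<tau>3 - 7/10*\<tau>2)^2 + 1/50*\<tau>2^2"
      by (simp add: power2_eq_square algebra_simps)
    moreover have "0 \<le> 1/50*\<tau>2^2" by simp
    ultimately have "14/5*\<tau>2*\<tau>3 \<le> 2*\<tau>3^2 + \<tau>2^2" by linarith
    then have "(14/5*\<tau>2*\<tau>3)/(6*\<tau>3) \<le> (2*\<tau>3^2 + \<tau>2^2)/(6*\<tau>3)" using p by (intro divide_right_mono) auto
    moreover have "(14/5*\<tau>2*\<tau>3)/(6*\<tau>3) = 14*\<tau>2/30" using p by simp
    moreover have "(2*\<tau>3^2 + \<tau>2^2)/(6*\<tau>3) = \<tau>3/3 + \<tau>2^2/(6*\<tau>3)" using p by (simp add: field_simps power2_eq_square)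
    ultimately show ?thesis by simp
  qed
  have c: "\<tau>1^3/(6*\<tau>2*(\<tau>1+\<tau>2)) \<le> 29*\<tau>2/30"
  proof -
    have t1: "\<tau>1 \<le> 50/19*\<tau>2" using r by simp
    have "\<tau>1^2 \<le> (50/19*\<tau>2)^2" using t1 p by (intro power_mono) auto
    then have "\<tau>1^3 \<le> \<tau>1*(50/19*\<tau>2)^2" using p by (simp add: power3_eq_cube power2_eq_square mult_left_mono)
    also have "\<dots> = (2500/361)*\<tau>2^2*\<tau>1" by (simp add: power2_eq_square)
    also have "\<dots> \<le> 29/5*\<tau>2^2*(\<tau>1+\<tau>2)"
    proof -
      have "(2500/361 - 29/5)*\<tau>1 \<le> 29/5*\<tau>2" using t1 p by simp
      then have "(2500/361)*\<tau>1 \<le> 29/5*(\<tau>1+\<tau>2)" by (simp add: algebra_simps)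
      then have "\<tau>2^2 * ((2500/361)*\<tau>1) \<le> \<tau>2^2 * (29/5*(\<tau>1+\<tau>2))" by (rule mult_left_mono) simp
      then show ?thesis by (simp add: algebra_simps)
    qed
    finally have "\<tau>1^3 \<le> 29/5*\<tau>2^2*(\<tau>1+\<tau>2)" .
    then have "\<tau>1^3/(6*\<tau>2*(\<tau>1+\<tau>2)) \<le> (29/5*\<tau>2^2*(\<tau>1+\<tau>2))/(6*\<tau>2*(\<tau>1+\<tau>2))"
      using p by (intro divide_right_mono) auto
    also have "\<dots> = 29*\<tau>2/30"
    proof -
      obtain S where S: "S = \<tau>1+\<tau>2" by blast
      have "S > 0" using S p by simp
      then show ?thesis unfolding S[symmetric] using p by (simp add: field_simps power2_eq_square)
    qed
    finally show ?thesis .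
  qed
  show ?thesis using a b c by linarith
qed

lemma coefR:
  fixes \<tau> \<tau>' :: real assumes "0 < \<tau>" "0 < \<tau>'"
  shows "(0 + (1/\<tau>)*\<tau>) = 1"
    and "(0 + 0*\<tau> + (1/\<tau>)*\<tau>^2/2 + (-2/(\<tau>*(\<tau>+\<tau>')))*\<tau>^3/12) = \<tau>/2 - \<tau>^2/(6*(\<tau>+\<tau>'))"
proof -
  show "(0 + (1/\<tau>)*\<tau>) = 1" using assms by simp
  obtain S where S: "S = \<tau>+\<tau>'" by blast
  have "S > 0" using S assms by simp
  then show "(0 + 0*\<tau> + (1/\<tau>)*\<tau>^2/2 + (-2/(\<tau>*(\<tau>+\<tau>')))*\<tau>^3/12) = \<tau>/2 - \<tau>^2/(6*(\<tau>+\<tau>'))"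
    unfolding S[symmetric] using assms by (simp add: field_simps power2_eq_square power3_eq_cube)
qed

lemma SIL_R:
  assumes "good g g1 g2 a b" "a < b" "0 < \<tau>'"
    and iP: "(g has_integral P) {a..b}"
    and iQ: "((\<lambda>s. (s - (a+b)/2) * g s) has_integral Q) {a..b}"
  shows "(1/(b-a))*P + (-2/((b-a)*((b-a)+\<tau>')))*Q \<ge> g a + ((b-a)/2 - (b-a)^2/(6*((b-a)+\<tau>')))*g1 a"
proof -
  define \<tau> where "\<tau> = b - a"
  have tp: "\<tau> > 0" using assms unfolding \<tau>_def by simp
  have "(1/\<tau>)*P + (-2/(\<tau>*(\<tau>+\<tau>')))*Q \<ge> (0 + (1/\<tau>)*(b-a))*g a
     + (0 + 0*(b-a) + (1/\<tau>)*(b-a)^2/2 + (-2/(\<tau>*(\<tau>+\<tau>')))*(b-a)^3/12)*g1 a - 0*g b - 0*g1 b"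
  proof (rule SILg[OF assms(1,2) iP iQ], rule phiS2)
    have n1: "\<tau> + \<tau>' \<noteq> 0" "\<tau> \<noteq> 0" "\<tau>' * (\<tau> * 4) + \<tau> * (\<tau> * 4) \<noteq> 0" using tp assms(3)
      by (auto, smt (verit) mult_pos_pos)
    have e: "- 2 / (\<tau> * (\<tau> + \<tau>')) * (b - a) / 4 = - (1/(\<tau>+\<tau>'))/2"
      using n1 unfolding \<tau>_def[symmetric] by (simp add: field_simps)
    have "1/(\<tau>+\<tau>') \<le> 1/\<tau>" using tp assms(3) by (intro divide_left_mono) auto
    then have h2: "(1/(\<tau>+\<tau>'))/2 \<le> (1/\<tau>)/2" by (rule divide_right_mono) simp
    show "0 \<le> 1 / \<tau> / 2 + - 2 / (\<tau> * (\<tau> + \<tau>')) * (b - a) / 4"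
      unfolding e using h2 by linarith
  qed (use tp assms(3) in \<open>auto simp: field_simps\<close>)
  then show ?thesis unfolding \<tau>_def[symmetric] using coefR[OF tp assms(3)] by simp
qed

lemma coefL:
  fixes x y :: real assumes "0 < x" "0 < y"
  shows "(-2/(y*(x+y)))*x^3/12 = -(x^3/(6*y*(x+y)))"
proof -
  obtain S where S: "S = x+y" by blast
  have "S > 0" using S assms by simp
  then show ?thesis unfolding S[symmetric] using assms by (simp add: field_simps)
qed

lemma Gint3:
  fixes g g1 g2 :: "real \<Rightarrow> real"
  assumes gd: "good g g1 g2 x0 x3" and o: "x0 < x1" "x1 < x2" "x2 < x3"
    and td: "\<tau>1 = x1 - x0" "\<tau>2 = x2 - x1" "\<tau>3 = x3 - x2" and t4: "0 < \<tau>4"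
    and r: "19*\<tau>1 \<le> 50*\<tau>2"
    and iP1: "(g has_integral P1) {x0..x1}" and iQ1: "((\<lambda>s. (s - (x0+x1)/2) * g s) has_integral Q1) {x0..x1}"
    and iP2: "(g has_integral P2) {x1..x2}" and iQ2: "((\<lambda>s. (s - (x1+x2)/2) * g s) has_integral Q2) {x1..x2}"
    and iP3: "(g has_integral P3) {x2..x3}" and iQ3: "((\<lambda>s. (s - (x2+x3)/2) * g s) has_integral Q3) {x2..x3}"
  shows "0 \<le> (P3/\<tau>3 - 2*Q3/(\<tau>3*(\<tau>3+\<tau>4))) + 2*Q2/(\<tau>3*(\<tau>2+\<tau>3))
              - ((P2/\<tau>2 - 2*Q2/(\<tau>2*(\<tau>2+\<tau>3))) + 2*Q1/(\<tau>2*(\<tau>1+\<tau>2)))"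
proof -
  have p: "0 < \<tau>1" "0 < \<tau>2" "0 < \<tau>3" using o td by auto
  have g1: "good g g1 g2 x0 x1" "good g g1 g2 x1 x2" "good g g1 g2 x2 x3"
    using gd o by (auto intro: good_sub)
  define D2 where "D2 = \<tau>3/2 - \<tau>3^2/(6*(\<tau>3+\<tau>4))"
  define D1 where "D1 = D2 + \<tau>2/2 + \<tau>2^2/(6*\<tau>3)"
  have D2p: "0 \<le> D2"
  proof -
    have "\<tau>3^2/(6*(\<tau>3+\<tau>4)) \<le> \<tau>3^2/(6*\<tau>3)" using p t4
      by (intro divide_left_mono) (auto simp: power2_eq_square)
    also have "\<dots> = \<tau>3/6" using p by (simp add: power2_eq_square)
    finally show ?thesis unfolding D2_def using p by linarith
  qed
  have R3: "(1/\<tau>3)*P3 + (-2/(\<tau>3*(\<tau>3+\<tau>4)))*Q3 \<ge> g x2 + D2*g1 x2"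
    using SIL_R[OF g1(3) o(3) t4 iP3 iQ3] unfolding td D2_def by simp
  define b2 where "b2 = 2/(\<tau>3*(\<tau>2+\<tau>3)) + 2/(\<tau>2*(\<tau>2+\<tau>3))"
  have b2e: "b2 = 2/(\<tau>2*\<tau>3)"
  proof -
    obtain S where S: "S = \<tau>2+\<tau>3" by blast
    have "S > 0" using S p by simp
    then show ?thesis unfolding b2_def S[symmetric] using p by (simp add: field_simps) (simp add: S algebra_simps)
  qed
  have R2: "(-1/\<tau>2)*P2 + b2*Q2 \<ge> (1 + (-1/\<tau>2)*(x2-x1))*g x1
      + (D2 + 1*(x2-x1) + (-1/\<tau>2)*(x2-x1)^2/2 + b2*(x2-x1)^3/12)*g1 x1 - 1*g x2 - D2*g1 x2"
  proof (rule SILg[OF g1(2) o(2) iP2 iQ2], rule phiS1)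
    show "0 \<le> b2" unfolding b2e using p by simp
    show "0 \<le> 1 + - 1 / \<tau>2 * (x2 - x1) / 2" unfolding td(2)[symmetric] using p by simp
  qed (use D2p in auto)
  have e2: "(1 + (-1/\<tau>2)*(x2-x1)) = 0" "(D2 + 1*(x2-x1) + (-1/\<tau>2)*(x2-x1)^2/2 + b2*(x2-x1)^3/12) = D1"
    unfolding td(2)[symmetric] D1_def b2e using p by (simp_all add: field_simps power2_eq_square power3_eq_cube)
  have R2': "(-1/\<tau>2)*P2 + b2*Q2 \<ge> D1*g1 x1 - g x2 - D2*g1 x2" using R2 unfolding e2 by simp
  define b1 where "b1 = -2/(\<tau>2*(\<tau>1+\<tau>2))"
  have M: "0 \<le> D1 + b1*\<tau>1^3/12"
  proof -
    have "D1 + b1*\<tau>1^3/12 = \<tau>3/2 - \<tau>3^2/(6*(\<tau>3+\<tau>4)) + \<tau>2/2 + \<tau>2^2/(6*\<tau>3) - \<tau>1^3/(6*\<tau>2*(\<tau>1+\<tau>2))"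
      unfolding D1_def D2_def b1_def using coefL[OF p(1,2)] by linarith
    then show ?thesis using M1ineq[OF p(1,2,3) t4 r] by simp
  qed
  have R1: "0*P1 + b1*Q1 \<ge> (0 + 0*(x1-x0))*g x0
      + (D1 + 0*(x1-x0) + 0*(x1-x0)^2/2 + b1*(x1-x0)^3/12)*g1 x0 - 0*g x1 - D1*g1 x1"
  proof (rule SILg[OF g1(1) o(1) iP1 iQ1], rule phiS3)
    show "b1 \<le> 0" unfolding b1_def using p by simp
  qed (use M td in auto)
  have R1': "b1*Q1 \<ge> (D1 + b1*\<tau>1^3/12)*g1 x0 - D1*g1 x1" using R1 unfolding td(1)[symmetric] by simp
  have g0: "0 \<le> (D1 + b1*\<tau>1^3/12)*g1 x0" using M goodD[OF gd, of x0] o by simp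
  have "(P3/\<tau>3 - 2*Q3/(\<tau>3*(\<tau>3+\<tau>4))) + 2*Q2/(\<tau>3*(\<tau>2+\<tau>3))
              - ((P2/\<tau>2 - 2*Q2/(\<tau>2*(\<tau>2+\<tau>3))) + 2*Q1/(\<tau>2*(\<tau>1+\<tau>2)))
        = ((1/\<tau>3)*P3 + (-2/(\<tau>3*(\<tau>3+\<tau>4)))*Q3) + ((-1/\<tau>2)*P2 + b2*Q2) + b1*Q1"
    unfolding b2_def b1_def by (simp add: algebra_simps)
  then show ?thesis using R3 R2' R1' g0 by linarith
qed

lemma Gint2:
  fixes g g1 g2 :: "real \<Rightarrow> real"
  assumes gd: "good g g1 g2 x1 x3" and o: "x1 < x2" "x2 < x3"
    and td: "\<tau>2 = x2 - x1" "\<tau>3 = x3 - x2" and t4: "0 < \<tau>4"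
    and iP2: "(g has_integral P2) {x1..x2}" and iQ2: "((\<lambda>s. (s - (x1+x2)/2) * g s) has_integral Q2) {x1..x2}"
    and iP3: "(g has_integral P3) {x2..x3}" and iQ3: "((\<lambda>s. (s - (x2+x3)/2) * g s) has_integral Q3) {x2..x3}"
  shows "0 \<le> (P3/\<tau>3 - 2*Q3/(\<tau>3*(\<tau>3+\<tau>4))) + 2*Q2/(\<tau>3*(\<tau>2+\<tau>3))
              - (P2/\<tau>2 - 2*Q2/(\<tau>2*(\<tau>2+\<tau>3)))"
proof -
  have p: "0 < \<tau>2" "0 < \<tau>3" using o td by auto
  have g1: "good g g1 g2 x1 x2" "good g g1 g2 x2 x3"
    using gd o by (auto intro: good_sub)
  define D2 where "D2 = \<tau>3/2 - \<tau>3^2/(6*(\<tau>3+\<tau>4))"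
  define D1 where "D1 = D2 + \<tau>2/2 + \<tau>2^2/(6*\<tau>3)"
  have D2p: "0 \<le> D2"
  proof -
    have "\<tau>3^2/(6*(\<tau>3+\<tau>4)) \<le> \<tau>3^2/(6*\<tau>3)" using p t4
      by (intro divide_left_mono) (auto simp: power2_eq_square)
    also have "\<dots> = \<tau>3/6" using p by (simp add: power2_eq_square)
    finally show ?thesis unfolding D2_def using p by linarith
  qed
  have D1p: "0 \<le> D1" unfolding D1_def using D2p p by simp
  have R3: "(1/\<tau>3)*P3 + (-2/(\<tau>3*(\<tau>3+\<tau>4)))*Q3 \<ge> g x2 + D2*g1 x2"
    using SIL_R[OF g1(2) o(2) t4 iP3 iQ3] unfolding td D2_def by simp
  define b2 where "b2 = 2/(\<tau>3*(\<tau>2+\<tau>3)) + 2/(\<tau>2*(\<tau>2+\<tau>3))"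
  have b2e: "b2 = 2/(\<tau>2*\<tau>3)"
  proof -
    obtain S where S: "S = \<tau>2+\<tau>3" by blast
    have "S > 0" using S p by simp
    then show ?thesis unfolding b2_def S[symmetric] using p by (simp add: field_simps) (simp add: S algebra_simps)
  qed
  have R2: "(-1/\<tau>2)*P2 + b2*Q2 \<ge> (1 + (-1/\<tau>2)*(x2-x1))*g x1
      + (D2 + 1*(x2-x1) + (-1/\<tau>2)*(x2-x1)^2/2 + b2*(x2-x1)^3/12)*g1 x1 - 1*g x2 - D2*g1 x2"
  proof (rule SILg[OF g1(1) o(1) iP2 iQ2], rule phiS1)
    show "0 \<le> b2" unfolding b2e using p by simp
    show "0 \<le> 1 + - 1 / \<tau>2 * (x2 - x1) / 2" unfolding td(1)[symmetric] using p by simp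
  qed (use D2p in auto)
  have e2: "(1 + (-1/\<tau>2)*(x2-x1)) = 0" "(D2 + 1*(x2-x1) + (-1/\<tau>2)*(x2-x1)^2/2 + b2*(x2-x1)^3/12) = D1"
    unfolding td(1)[symmetric] D1_def b2e using p by (simp_all add: field_simps power2_eq_square power3_eq_cube)
  have R2': "(-1/\<tau>2)*P2 + b2*Q2 \<ge> D1*g1 x1 - g x2 - D2*g1 x2" using R2 unfolding e2 by simp
  have g0: "0 \<le> D1*g1 x1" using D1p goodD[OF gd, of x1] o by simp
  have "(P3/\<tau>3 - 2*Q3/(\<tau>3*(\<tau>3+\<tau>4))) + 2*Q2/(\<tau>3*(\<tau>2+\<tau>3))
              - (P2/\<tau>2 - 2*Q2/(\<tau>2*(\<tau>2+\<tau>3)))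
        = ((1/\<tau>3)*P3 + (-2/(\<tau>3*(\<tau>3+\<tau>4)))*Q3) + ((-1/\<tau>2)*P2 + b2*Q2)"
    unfolding b2_def by (simp add: algebra_simps)
  then show ?thesis using R3 R2' g0 by linarith
qed

lemma cineq:
  fixes \<tau>1 \<tau>2 :: real
  assumes p: "0 < \<tau>1" "0 < \<tau>2" and r: "19*\<tau>1 \<le> 50*\<tau>2"
  shows "\<tau>1^3/(6*\<tau>2*(\<tau>1+\<tau>2)) \<le> 29*\<tau>2/30"
proof -
  have t1: "\<tau>1 \<le> 50/19*\<tau>2" using r by simp
  have "\<tau>1^2 \<le> (50/19*\<tau>2)^2" using t1 p by (intro power_mono) auto
  then have "\<tau>1^3 \<le> \<tau>1*(50/19*\<tau>2)^2" using p by (simp add: power3_eq_cube power2_eq_square mult_left_mono)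
  also have "\<dots> = (2500/361)*\<tau>2^2*\<tau>1" by (simp add: power2_eq_square)
  also have "\<dots> \<le> 29/5*\<tau>2^2*(\<tau>1+\<tau>2)"
  proof -
    have "(2500/361 - 29/5)*\<tau>1 \<le> 29/5*\<tau>2" using t1 p by simp
    then have "(2500/361)*\<tau>1 \<le> 29/5*(\<tau>1+\<tau>2)" by (simp add: algebra_simps)
    then have "\<tau>2^2 * ((2500/361)*\<tau>1) \<le> \<tau>2^2 * (29/5*(\<tau>1+\<tau>2))" by (rule mult_left_mono) simp
    then show ?thesis by (simp add: algebra_simps)
  qed
  finally have "\<tau>1^3 \<le> 29/5*\<tau>2^2*(\<tau>1+\<tau>2)" .
  then have "\<tau>1^3/(6*\<tau>2*(\<tau>1+\<tau>2)) \<le> (29/5*\<tau>2^2*(\<tau>1+\<tau>2))/(6*\<tau>2*(\<tau>1+\<tau>2))"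
    using p by (intro divide_right_mono) auto
  also have "\<dots> = 29*\<tau>2/30"
  proof -
    obtain S where S: "S = \<tau>1+\<tau>2" by blast
    have "S > 0" using S p by simp
    then show ?thesis unfolding S[symmetric] using p by (simp add: field_simps power2_eq_square)
  qed
  finally show ?thesis .
qed

lemma TopL2:
  fixes g g1 g2 :: "real \<Rightarrow> real"
  assumes gd: "good g g1 g2 x1 x2" and o: "x1 < x2"
    and td: "\<tau>2 = x2 - x1" and t3: "0 < \<tau>3" and mu: "0 \<le> \<mu>"
    and iP2: "(g has_integral P2) {x1..x2}" and iQ2: "((\<lambda>s. (s - (x1+x2)/2) * g s) has_integral Q2) {x1..x2}"
  shows "0 \<le> 2*g x2 + \<mu>*(2*Q2/(\<tau>3*(\<tau>2+\<tau>3))) - (P2/\<tau>2 - 2*Q2/(\<tau>2*(\<tau>2+\<tau>3)))"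
proof -
  have p: "0 < \<tau>2" using o td by auto
  define b2 where "b2 = \<mu>*(2/(\<tau>3*(\<tau>2+\<tau>3))) + 2/(\<tau>2*(\<tau>2+\<tau>3))"
  have b2p: "0 \<le> b2" unfolding b2_def using p t3 mu by simp
  define E where "E = 3*\<tau>2/2 + b2*\<tau>2^3/12"
  have R2: "(-1/\<tau>2)*P2 + b2*Q2 \<ge> (2 + (-1/\<tau>2)*(x2-x1))*g x1
      + (0 + 2*(x2-x1) + (-1/\<tau>2)*(x2-x1)^2/2 + b2*(x2-x1)^3/12)*g1 x1 - 2*g x2 - 0*g1 x2"
  proof (rule SILg[OF gd o iP2 iQ2], rule phiS1)
    show "0 \<le> 2 + - 1 / \<tau>2 * (x2 - x1) / 2" unfolding td[symmetric] using p by simp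
  qed (use b2p in auto)
  have e2: "(2 + (-1/\<tau>2)*(x2-x1)) = 1" "(0 + 2*(x2-x1) + (-1/\<tau>2)*(x2-x1)^2/2 + b2*(x2-x1)^3/12) = E"
    unfolding td[symmetric] E_def using p by (simp_all add: field_simps power2_eq_square power3_eq_cube)
  have Ep: "0 \<le> E" unfolding E_def using p b2p by simp
  have R2': "(-1/\<tau>2)*P2 + b2*Q2 \<ge> g x1 + E*g1 x1 - 2*g x2" using R2 unfolding e2 by simp
  have g0: "0 \<le> E*g1 x1" "0 \<le> g x1" using Ep goodD[OF gd, of x1] o by simp_all
  have "2*g x2 + \<mu>*(2*Q2/(\<tau>3*(\<tau>2+\<tau>3))) - (P2/\<tau>2 - 2*Q2/(\<tau>2*(\<tau>2+\<tau>3)))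
        = 2*g x2 + ((-1/\<tau>2)*P2 + b2*Q2)"
    unfolding b2_def by (simp add: algebra_simps)
  then show ?thesis using R2' g0 by linarith
qed

lemma TopL3:
  fixes g g1 g2 :: "real \<Rightarrow> real"
  assumes gd: "good g g1 g2 x0 x2" and o: "x0 < x1" "x1 < x2"
    and td: "\<tau>1 = x1 - x0" "\<tau>2 = x2 - x1" and t3: "0 < \<tau>3" and mu: "0 \<le> \<mu>"
    and r: "19*\<tau>1 \<le> 50*\<tau>2"
    and iP1: "(g has_integral P1) {x0..x1}" and iQ1: "((\<lambda>s. (s - (x0+x1)/2) * g s) has_integral Q1) {x0..x1}"
    and iP2: "(g has_integral P2) {x1..x2}" and iQ2: "((\<lambda>s. (s - (x1+x2)/2) * g s) has_integral Q2) {x1..x2}"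
  shows "0 \<le> 2*g x2 + \<mu>*(2*Q2/(\<tau>3*(\<tau>2+\<tau>3))) - ((P2/\<tau>2 - 2*Q2/(\<tau>2*(\<tau>2+\<tau>3))) + 2*Q1/(\<tau>2*(\<tau>1+\<tau>2)))"
proof -
  have p: "0 < \<tau>1" "0 < \<tau>2" using o td by auto
  have g1: "good g g1 g2 x0 x1" "good g g1 g2 x1 x2"
    using gd o by (auto intro: good_sub)
  define b2 where "b2 = \<mu>*(2/(\<tau>3*(\<tau>2+\<tau>3))) + 2/(\<tau>2*(\<tau>2+\<tau>3))"
  have b2p: "0 \<le> b2" unfolding b2_def using p t3 mu by simp
  define E where "E = 3*\<tau>2/2 + b2*\<tau>2^3/12"
  have R2: "(-1/\<tau>2)*P2 + b2*Q2 \<ge> (2 + (-1/\<tau>2)*(x2-x1))*g x1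
      + (0 + 2*(x2-x1) + (-1/\<tau>2)*(x2-x1)^2/2 + b2*(x2-x1)^3/12)*g1 x1 - 2*g x2 - 0*g1 x2"
  proof (rule SILg[OF g1(2) o(2) iP2 iQ2], rule phiS1)
    show "0 \<le> 2 + - 1 / \<tau>2 * (x2 - x1) / 2" unfolding td(2)[symmetric] using p by simp
  qed (use b2p in auto)
  have e2: "(2 + (-1/\<tau>2)*(x2-x1)) = 1" "(0 + 2*(x2-x1) + (-1/\<tau>2)*(x2-x1)^2/2 + b2*(x2-x1)^3/12) = E"
    unfolding td(2)[symmetric] E_def using p by (simp_all add: field_simps power2_eq_square power3_eq_cube)
  have R2': "(-1/\<tau>2)*P2 + b2*Q2 \<ge> g x1 + E*g1 x1 - 2*g x2" using R2 unfolding e2 by simp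
  define b1 where "b1 = -2/(\<tau>2*(\<tau>1+\<tau>2))"
  have M: "0 \<le> E + b1*\<tau>1^3/12"
  proof -
    have "E + b1*\<tau>1^3/12 = E - \<tau>1^3/(6*\<tau>2*(\<tau>1+\<tau>2))"
      unfolding b1_def using coefL[OF p(1,2)] by linarith
    moreover have "3*\<tau>2/2 \<le> E" unfolding E_def using b2p p by simp
    ultimately show ?thesis using cineq[OF p r] p by linarith
  qed
  have R1: "0*P1 + b1*Q1 \<ge> (1 + 0*(x1-x0))*g x0
      + (E + 1*(x1-x0) + 0*(x1-x0)^2/2 + b1*(x1-x0)^3/12)*g1 x0 - 1*g x1 - E*g1 x1"
  proof (rule SILg[OF g1(1) o(1) iP1 iQ1], rule phiS3)
    show "b1 \<le> 0" unfolding b1_def using p by simp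
  qed (use M td in auto)
  have R1': "b1*Q1 \<ge> g x0 + (E + \<tau>1 + b1*\<tau>1^3/12)*g1 x0 - g x1 - E*g1 x1"
    using R1 unfolding td(1)[symmetric] by (simp add: algebra_simps)
  have g0: "0 \<le> (E + \<tau>1 + b1*\<tau>1^3/12)*g1 x0" "0 \<le> g x0" using M p goodD[OF gd, of x0] o by simp_all
  have "2*g x2 + \<mu>*(2*Q2/(\<tau>3*(\<tau>2+\<tau>3))) - ((P2/\<tau>2 - 2*Q2/(\<tau>2*(\<tau>2+\<tau>3))) + 2*Q1/(\<tau>2*(\<tau>1+\<tau>2)))
        = 2*g x2 + ((-1/\<tau>2)*P2 + b2*Q2) + b1*Q1"
    unfolding b2_def b1_def by (simp add: algebra_simps)
  then show ?thesis using R2' R1' g0 by linarith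
qed

definition gg :: "real \<Rightarrow> real \<Rightarrow> real \<Rightarrow> real" where
  "gg \<alpha> c s = (c - s) powr (-\<alpha>) / Gamma (1 - \<alpha>)"
definition gg1 :: "real \<Rightarrow> real \<Rightarrow> real \<Rightarrow> real" where
  "gg1 \<alpha> c s = \<alpha> * (c - s) powr (-\<alpha> - 1) / Gamma (1 - \<alpha>)"
definition gg2 :: "real \<Rightarrow> real \<Rightarrow> real \<Rightarrow> real" where
  "gg2 \<alpha> c s = \<alpha> * (\<alpha> + 1) * (c - s) powr (-\<alpha> - 2) / Gamma (1 - \<alpha>)"

lemma Gp: "\<alpha> < 1 \<Longrightarrow> Gamma (1 - \<alpha>) > (0::real)" using Gamma_real_pos[of "1-\<alpha>"] by simp

lemma gg_der: "s < c \<Longrightarrow> (gg \<alpha> c has_real_derivative gg1 \<alpha> c s) (at s)"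
proof -
  assume sc: "s < c"
  have "((\<lambda>s. (c - s) powr (-\<alpha>)) has_real_derivative \<alpha> * (c - s) powr (-\<alpha> - 1)) (at s)"
    using sc by (auto intro!: derivative_eq_intros simp: field_simps)
  from DERIV_cdivide[OF this, of "Gamma (1-\<alpha>)"] show ?thesis
    unfolding gg_def gg1_def by simp
qed

lemma gg1_der: "s < c \<Longrightarrow> (gg1 \<alpha> c has_real_derivative gg2 \<alpha> c s) (at s)"
proof -
  assume sc: "s < c"
  have "((\<lambda>s. \<alpha> * (c - s) powr (-\<alpha> - 1)) has_real_derivative \<alpha> * (\<alpha> + 1) * (c - s) powr (-\<alpha> - 2)) (at s)"
    using sc by (auto intro!: derivative_eq_intros simp: field_simps diff_diff_eq[symmetric] simp del: diff_diff_eq)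
  from DERIV_cdivide[OF this, of "Gamma (1-\<alpha>)"] show ?thesis
    unfolding gg1_def gg2_def by simp
qed

lemma good_gg:
  assumes "0 < \<alpha>" "\<alpha> < 1" "b < c"
  shows "good (gg \<alpha> c) (gg1 \<alpha> c) (gg2 \<alpha> c) a b"
  unfolding good_def
proof (intro ballI conjI)
  fix s assume s: "s \<in> {a..b}"
  then have sc: "s < c" using assms by simp
  show "(gg \<alpha> c has_real_derivative gg1 \<alpha> c s) (at s)" using gg_der[OF sc] .
  show "(gg1 \<alpha> c has_real_derivative gg2 \<alpha> c s) (at s)" using gg1_der[OF sc] .
  have G: "Gamma (1 - \<alpha>) > 0" using assms Gp by simp
  show "0 \<le> gg \<alpha> c s" unfolding gg_def using G by simp
  show "0 \<le> gg1 \<alpha> c s" unfolding gg1_def using G assms by simp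
  show "0 \<le> gg2 \<alpha> c s" unfolding gg2_def using G assms by simp
qed

lemma good_diff:
  assumes "0 < \<alpha>" "\<alpha> < 1" "b < c'" "c' \<le> c"
  shows "good (\<lambda>s. gg \<alpha> c' s - gg \<alpha> c s) (\<lambda>s. gg1 \<alpha> c' s - gg1 \<alpha> c s) (\<lambda>s. gg2 \<alpha> c' s - gg2 \<alpha> c s) a b"
  unfolding good_def
proof (intro ballI conjI)
  fix s assume s: "s \<in> {a..b}"
  then have sc: "s < c'" "s < c" using assms by auto
  show "((\<lambda>s. gg \<alpha> c' s - gg \<alpha> c s) has_real_derivative gg1 \<alpha> c' s - gg1 \<alpha> c s) (at s)"
    using gg_der[OF sc(1)] gg_der[OF sc(2)] by (rule DERIV_diff)
  show "((\<lambda>s. gg1 \<alpha> c' s - gg1 \<alpha> c s) has_real_derivative gg2 \<alpha> c' s - gg2 \<alpha> c s) (at s)"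
    using gg1_der[OF sc(1)] gg1_der[OF sc(2)] by (rule DERIV_diff)
  have G: "Gamma (1 - \<alpha>) > 0" using assms Gp by simp
  have m: "(c - s) powr e \<le> (c' - s) powr e" if "e \<le> 0" for e
    using powr_mono2'[OF that, of "c' - s" "c - s"] sc assms by simp
  show "0 \<le> gg \<alpha> c' s - gg \<alpha> c s" unfolding gg_def using G m[of "-\<alpha>"] assms
    by (simp add: divide_right_mono)
  show "0 \<le> gg1 \<alpha> c' s - gg1 \<alpha> c s" unfolding gg1_def using G m[of "-\<alpha>-1"] assms
    by (simp add: divide_right_mono mult_left_mono)
  have "\<alpha> * (\<alpha> + 1) * (c - s) powr (- \<alpha> - 2) \<le> \<alpha> * (\<alpha> + 1) * (c' - s) powr (- \<alpha> - 2)"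
    using m[of "-\<alpha>-2"] assms by (intro mult_left_mono) auto
  then show "0 \<le> gg2 \<alpha> c' s - gg2 \<alpha> c s" unfolding gg2_def using G
    by (simp add: divide_right_mono)
qed

lemma gg_cont: "b < c \<Longrightarrow> continuous_on {a..b} (gg \<alpha> c)"
  unfolding gg_def divide_inverse by (intro continuous_intros) auto

lemma gg_int: "b < c \<Longrightarrow> (gg \<alpha> c has_integral integral {a..b} (gg \<alpha> c)) {a..b}"
  by (intro integrable_integral integrable_continuous_interval gg_cont)

lemma ggm_int: "b < c \<Longrightarrow> ((\<lambda>s. (s - m) * gg \<alpha> c s) has_integral integral {a..b} (\<lambda>s. (s - m) * gg \<alpha> c s)) {a..b}"
  by (intro integrable_integral integrable_continuous_interval continuous_intros gg_cont)

lemma psiR_bound: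
  assumes al: "0 < \<alpha>" "\<alpha> < 1" and ab: "a < b" and tp: "0 < \<tau>'" and c1: "b + \<tau>'/2 \<le> c" and c2: "c \<le> b + \<tau>'"
  shows "integral {a..b} (gg \<alpha> c)/(b-a) - 2*integral {a..b} (\<lambda>s. (s-(a+b)/2)*gg \<alpha> c s)/((b-a)*((b-a)+\<tau>'))
         \<le> 2*gg \<alpha> c a"
proof -
  define \<tau> where "\<tau> = b - a"
  have t: "0 < \<tau>" using ab unfolding \<tau>_def by simp
  have bc: "b < c" using c1 tp by simp
  define P where "P = integral {a..b} (gg \<alpha> c)"
  define Q where "Q = integral {a..b} (\<lambda>s. (s-(a+b)/2)*gg \<alpha> c s)"
  have iP: "(gg \<alpha> c has_integral P) {a..b}" unfolding P_def using gg_int[OF bc] .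
  have iQ: "((\<lambda>s. (s-(a+b)/2)*gg \<alpha> c s) has_integral Q) {a..b}" unfolding Q_def using ggm_int[OF bc] .
  define F where "F = (\<lambda>s. (1/\<tau>) * gg \<alpha> c s + (-2/(\<tau>*(\<tau>+\<tau>'))) * ((s-(a+b)/2)*gg \<alpha> c s))"
  have iF: "(F has_integral ((1/\<tau>)*P + (-2/(\<tau>*(\<tau>+\<tau>')))*Q)) {a..b}"
    unfolding F_def by (intro has_integral_add has_integral_mult_right iP iQ)
  define K where "K = 2 * gg \<alpha> c a / \<tau>"
  have iK: "((\<lambda>s. K) has_integral (K * \<tau>)) {a..b}"
    using has_integral_const_real[of K a b] ab unfolding \<tau>_def by (simp add: mult.commute)
  have G: "Gamma (1 - \<alpha>) > 0" using al Gp by simp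
  have le: "F s \<le> K" if s: "s \<in> {a..b}" for s
  proof -
    have cs: "0 < c - s" using s bc by simp
    have gs: "0 \<le> gg \<alpha> c s" unfolding gg_def using G by simp
    have "F s = (1 - 2*(s-(a+b)/2)/(\<tau>+\<tau>')) * gg \<alpha> c s / \<tau>"
    proof -
      obtain S where S: "S = \<tau>+\<tau>'" by blast
      have "S > 0" using S t tp by simp
      then show ?thesis unfolding F_def S[symmetric] using t by (simp add: field_simps)
    qed
    also have "\<dots> \<le> (2*(c - s)/(\<tau>+\<tau>')) * gg \<alpha> c s / \<tau>"
    proof -
      have "1 - 2*(s-(a+b)/2)/(\<tau>+\<tau>') \<le> 2*(c - s)/(\<tau>+\<tau>')"
      proof -
        have "(\<tau>+\<tau>') - 2*(s-(a+b)/2) = 2 * b + \<tau>' - 2 * s" unfolding \<tau>_def by (simp add: field_simps)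
        then have "(\<tau>+\<tau>') - 2*(s-(a+b)/2) \<le> 2*(c-s)" using c1 by simp
        then have "((\<tau>+\<tau>') - 2*(s-(a+b)/2))/(\<tau>+\<tau>') \<le> 2*(c-s)/(\<tau>+\<tau>')"
          using t tp by (intro divide_right_mono) auto
        moreover have "((\<tau>+\<tau>') - 2*(s-(a+b)/2))/(\<tau>+\<tau>') = 1 - 2*(s-(a+b)/2)/(\<tau>+\<tau>')"
          using t tp by (simp add: diff_divide_distrib)
        ultimately show ?thesis by simp
      qed
      then show ?thesis using gs t by (intro divide_right_mono mult_right_mono) auto
    qed
    also have "\<dots> = 2 * (c - s) powr (1 - \<alpha>) / (Gamma (1-\<alpha>) * (\<tau>+\<tau>') * \<tau>)"
    proof -
      have "(c - s) * (c - s) powr (-\<alpha>) = (c - s) powr (1 - \<alpha>)"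
        using cs by (simp add: powr_diff powr_minus_divide)
      then show ?thesis unfolding gg_def by (simp add: field_simps)
    qed
    also have "\<dots> \<le> 2 * (c - a) powr (1 - \<alpha>) / (Gamma (1-\<alpha>) * (\<tau>+\<tau>') * \<tau>)"
    proof -
      have "(c - s) powr (1 - \<alpha>) \<le> (c - a) powr (1 - \<alpha>)"
        using s cs al by (intro powr_mono2) auto
      then show ?thesis using G t tp by (intro divide_right_mono) auto
    qed
    also have "\<dots> = 2 * ((c - a)/(\<tau>+\<tau>')) * gg \<alpha> c a / \<tau>"
    proof -
      have ca: "0 < c - a" using ab bc by simp
      have "(c - a) * (c - a) powr (-\<alpha>) = (c - a) powr (1 - \<alpha>)"
        using ca by (simp add: powr_diff powr_minus_divide)
      then show ?thesis unfolding gg_def by (simp add: field_simps)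
    qed
    also have "\<dots> \<le> 2 * 1 * gg \<alpha> c a / \<tau>"
    proof -
      have "(c - a)/(\<tau>+\<tau>') \<le> 1" using c2 t tp unfolding \<tau>_def by simp
      moreover have "0 \<le> gg \<alpha> c a" unfolding gg_def using G by simp
      ultimately show ?thesis using t by (intro divide_right_mono mult_right_mono mult_left_mono) auto
    qed
    finally show ?thesis unfolding K_def by simp
  qed
  have "(1/\<tau>)*P + (-2/(\<tau>*(\<tau>+\<tau>')))*Q \<le> K * \<tau>" by (rule has_integral_le[OF iF iK le])
  moreover have "K * \<tau> = 2 * gg \<alpha> c a" unfolding K_def using t by simp
  moreover have "(1/\<tau>)*P + (-2/(\<tau>*(\<tau>+\<tau>')))*Q = P/\<tau> - 2*Q/(\<tau>*(\<tau>+\<tau>'))" by simp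
  ultimately show ?thesis unfolding P_def Q_def \<tau>_def by simp
qed

lemma top_int:
  assumes al: "0 < \<alpha>" "\<alpha> < 1" and ac: "a < c"
  shows "integral {a..c} (gg \<alpha> c) = (c - a) powr (1 - \<alpha>) / ((1 - \<alpha>) * Gamma (1 - \<alpha>))"
proof -
  define F where "F = (\<lambda>s. -((c - s) powr (1 - \<alpha>)) / ((1 - \<alpha>) * Gamma (1 - \<alpha>)))"
  have G: "Gamma (1 - \<alpha>) > 0" using al Gp by simp
  have "(gg \<alpha> c has_integral (F c - F a)) {a..c}"
  proof (rule fundamental_theorem_of_calculus_interior)
    show "a \<le> c" using ac by simp
    have "continuous_on {a..c} (\<lambda>s. (c - s) powr (1 - \<alpha>))"
      by (rule continuous_on_powr') (auto intro: continuous_intros simp: al)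
    then show "continuous_on {a..c} F" unfolding F_def
      by (intro continuous_on_divide continuous_on_minus continuous_on_const) (use G in auto)
    fix x assume x: "x \<in> {a<..<c}"
    have "((\<lambda>s. (c - s) powr (1 - \<alpha>)) has_real_derivative (1-\<alpha>) * (c - x) powr (-\<alpha>) * (-1)) (at x)"
      using x by (auto intro!: derivative_eq_intros)
    from DERIV_cdivide[OF DERIV_minus[OF this], of "(1 - \<alpha>) * Gamma (1 - \<alpha>)"]
    have "(F has_real_derivative (-((1-\<alpha>) * (c - x) powr (-\<alpha>) * (-1))) / ((1 - \<alpha>) * Gamma (1 - \<alpha>))) (at x)"
      unfolding F_def by simp
    moreover have "(-((1-\<alpha>) * (c - x) powr (-\<alpha>) * (-1))) / ((1 - \<alpha>) * Gamma (1 - \<alpha>)) = gg \<alpha> c x"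
      unfolding gg_def using al G by simp
    ultimately have "(F has_real_derivative gg \<alpha> c x) (at x)" by simp
    then show "(F has_vector_derivative gg \<alpha> c x) (at x)"
      by (simp add: has_real_derivative_iff_has_vector_derivative)
  qed
  moreover have "F c - F a = (c - a) powr (1 - \<alpha>) / ((1 - \<alpha>) * Gamma (1 - \<alpha>))"
    unfolding F_def by simp
  ultimately show ?thesis by (simp add: integral_unique)
qed

definition FX :: "real \<Rightarrow> real \<Rightarrow> real" where
  "FX \<alpha> r = 2 * (1 - \<alpha>/2) * r / (1 + \<alpha> + (1 - \<alpha>/2) * r) + r / (1 + r)"

definition FF :: "real \<Rightarrow> real \<Rightarrow> real" where
  "FF \<alpha> r = 2 * sqrt (FX \<alpha> r) + 3 - 1 / (r^2 * (1 + r))"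

lemma den_pos: "0 < \<alpha> \<Longrightarrow> \<alpha> < 1 \<Longrightarrow> 0 \<le> x \<Longrightarrow> 0 < 1 + \<alpha> + (1 - \<alpha>/2) * (x::real)"
proof -
  assume a: "0 < \<alpha>" "\<alpha> < 1" "0 \<le> x"
  have "0 \<le> (1 - \<alpha>/2) * x" using a by simp
  then show ?thesis using a by linarith
qed

lemma FX_alt: "FX \<alpha> r = 2 * ((1 - \<alpha>/2) * r / (1 + \<alpha> + (1 - \<alpha>/2) * r)) + r / (1 + r)"
  unfolding FX_def by (simp only: mult.assoc times_divide_eq_right)

lemma frac_mono:
  fixes A u1 u2 :: real
  assumes "0 < A" "0 \<le> u1" "u1 \<le> u2"
  shows "u1 / (A + u1) \<le> u2 / (A + u2)"
proof -
  have "u1 * (A + u2) \<le> u2 * (A + u1)" using assms by (simp add: algebra_simps mult_left_mono)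
  then show ?thesis using assms by (simp add: divide_simps)
qed

lemma FX_mono:
  assumes "0 < \<alpha>" "\<alpha> < 1" "0 < r1" "r1 \<le> r2"
  shows "FX \<alpha> r1 \<le> FX \<alpha> r2"
proof -
  have a: "(1 - \<alpha>/2) * r1 / (1 + \<alpha> + (1 - \<alpha>/2) * r1) \<le> (1 - \<alpha>/2) * r2 / (1 + \<alpha> + (1 - \<alpha>/2) * r2)"
    using assms by (intro frac_mono) (auto intro: mult_left_mono)
  have b: "r1 / (1 + r1) \<le> r2 / (1 + r2)" using frac_mono[of 1 r1 r2] assms by (simp add: add.commute)
  show ?thesis unfolding FX_alt using a b by simp
qed

lemma FX_nonneg: "0 < \<alpha> \<Longrightarrow> \<alpha> < 1 \<Longrightarrow> 0 < r \<Longrightarrow> 0 \<le> FX \<alpha> r"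
  unfolding FX_alt using den_pos[of \<alpha> r] by (intro add_nonneg_nonneg divide_nonneg_pos mult_nonneg_nonneg) auto

lemma FX_le2: "0 < \<alpha> \<Longrightarrow> \<alpha> < 1 \<Longrightarrow> 0 < r \<Longrightarrow> FX \<alpha> r \<le> 3"
proof -
  assume a: "0 < \<alpha>" "\<alpha> < 1" "0 < r"
  have d: "0 < 1 + \<alpha> + (1 - \<alpha>/2) * r" using den_pos[of \<alpha> r] a by simp
  have "(1 - \<alpha>/2) * r \<le> 1 + \<alpha> + (1 - \<alpha>/2) * r" using a by simp
  then have "(1 - \<alpha>/2) * r / (1 + \<alpha> + (1 - \<alpha>/2) * r) \<le> 1" using d by (simp add: divide_le_eq_1)
  moreover have "r / (1 + r) \<le> 1" using a by (simp add: divide_simps)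
  ultimately show ?thesis unfolding FX_alt by simp
qed

lemma FF_strict:
  assumes "0 < \<alpha>" "\<alpha> < 1" "0 < r1" "r1 < r2"
  shows "FF \<alpha> r1 < FF \<alpha> r2"
proof -
  have "sqrt (FX \<alpha> r1) \<le> sqrt (FX \<alpha> r2)" using FX_mono[of \<alpha> r1 r2] assms by simp
  moreover have "1 / (r2^2 * (1 + r2)) < 1 / (r1^2 * (1 + r1))"
  proof -
    have "r1^2 * (1 + r1) < r2^2 * (1 + r2)" using assms
      by (intro mult_strict_mono power_strict_mono) auto
    then show ?thesis using assms by (intro divide_strict_left_mono) auto
  qed
  ultimately show ?thesis unfolding FF_def by linarith
qed

lemma FF_cont: "0 < \<alpha> \<Longrightarrow> \<alpha> < 1 \<Longrightarrow> continuous_on {1/10..1} (FF \<alpha>)"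
  unfolding FF_def FX_alt
proof (intro continuous_intros ballI)
  fix x :: real assume "\<alpha> > 0" "\<alpha> < 1" and x: "x \<in> {1/10..1}"
  then show "1 + \<alpha> + (1 - \<alpha>/2) * x \<noteq> 0" using den_pos[of \<alpha> x] by simp
  show "1 + x \<noteq> 0" using x by simp
  show "x^2 * (1 + x) \<noteq> 0" using x by simp
qed

lemma rstar_ex1:
  assumes "0 < \<alpha>" "\<alpha> < 1"
  shows "\<exists>!r. r > 0 \<and> 2 * sqrt (2 * (1 - \<alpha>/2) * r / (1 + \<alpha> + (1 - \<alpha>/2) * r) + r / (1 + r))
     + 3 - 1 / (r^2 * (1 + r)) = 0"
proof -
  have e: "\<And>r. (2 * sqrt (2 * (1 - \<alpha>/2) * r / (1 + \<alpha> + (1 - \<alpha>/2) * r) + r / (1 + r))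
     + 3 - 1 / (r^2 * (1 + r))) = FF \<alpha> r" unfolding FF_def FX_def by simp
  have lo: "FF \<alpha> (1/10) \<le> 0"
  proof -
    have "sqrt (FX \<alpha> (1/10)) \<le> sqrt 3" using FX_le2[OF assms, of "1/10"] by simp
    also have "\<dots> \<le> 2" by (rule real_le_lsqrt) auto
    finally show ?thesis unfolding FF_def by (simp add: power2_eq_square)
  qed
  have hi: "0 \<le> FF \<alpha> 1"
  proof -
    have "0 \<le> sqrt (FX \<alpha> 1)" using FX_nonneg[OF assms, of 1] by simp
    then show ?thesis unfolding FF_def by simp
  qed
  obtain r where r: "1/10 \<le> r" "r \<le> 1" "FF \<alpha> r = 0"
    using IVT'[of "FF \<alpha>" "1/10" 0 1, OF lo hi _ FF_cont[OF assms]] by auto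
  show ?thesis
  proof (rule ex1I[of _ r])
    show "r > 0 \<and> 2 * sqrt (2 * (1 - \<alpha>/2) * r / (1 + \<alpha> + (1 - \<alpha>/2) * r) + r / (1 + r))
     + 3 - 1 / (r^2 * (1 + r)) = 0" using r e by simp
    fix y assume y: "y > 0 \<and> 2 * sqrt (2 * (1 - \<alpha>/2) * y / (1 + \<alpha> + (1 - \<alpha>/2) * y) + y / (1 + y))
     + 3 - 1 / (y^2 * (1 + y)) = 0"
    then have y1: "y > 0" and y2: "2 * sqrt (2 * (1 - \<alpha>/2) * y / (1 + \<alpha> + (1 - \<alpha>/2) * y) + y / (1 + y))
     + 3 - 1 / (y^2 * (1 + y)) = 0" by blast+
    have fy: "FF \<alpha> y = 0" using y2 unfolding e .
    show "y = r"
    proof (rule ccontr)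
      assume "y \<noteq> r"
      then consider "y < r" | "r < y" by linarith
      then show False
      proof cases
        case 1 then show False using FF_strict[OF assms y1 1] fy r(3) by simp
      next
        case 2
        have "0 < r" using r(1) by simp
        then show False using FF_strict[OF assms _ 2] fy r(3) by simp
      qed
    qed
  qed
qed

lemma rstar_prop:
  assumes "0 < \<alpha>" "\<alpha> < 1"
  shows "rstar \<alpha> > 0" "FF \<alpha> (rstar \<alpha>) = 0"
proof -
  have "rstar \<alpha> > 0 \<and> 2 * sqrt (2 * (1 - \<alpha>/2) * rstar \<alpha> / (1 + \<alpha> + (1 - \<alpha>/2) * rstar \<alpha>) + rstar \<alpha> / (1 + rstar \<alpha>))
     + 3 - 1 / ((rstar \<alpha>)^2 * (1 + rstar \<alpha>)) = 0"
    unfolding rstar_def by (rule theI'[OF rstar_ex1[OF assms]])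
  then show "rstar \<alpha> > 0" "FF \<alpha> (rstar \<alpha>) = 0" unfolding FF_def FX_def by auto
qed

lemma rstar_ge:
  assumes "0 < \<alpha>" "\<alpha> < 1"
  shows "19/50 \<le> rstar \<alpha>"
proof (rule ccontr)
  define r where "r = rstar \<alpha>"
  assume "\<not> 19/50 \<le> rstar \<alpha>"
  then have rl: "r < 19/50" unfolding r_def by simp
  have rp: "0 < r" using rstar_prop[OF assms] unfolding r_def by simp
  have F0: "FF \<alpha> r = 0" using rstar_prop[OF assms] unfolding r_def by simp
  have X1: "FX \<alpha> r < 1"
  proof -
    have u: "(1 - \<alpha>/2) * r / (1 + \<alpha> + (1 - \<alpha>/2) * r) \<le> r / (1 + r)"
    proof -
      have e: "r * (1 + \<alpha> + (1 - \<alpha>/2) * r) - (1 - \<alpha>/2) * r * (1 + r) = (3*\<alpha>/2)*r"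
        by (simp add: algebra_simps)
      have "0 \<le> (3*\<alpha>/2)*r" using assms rp by simp
      then have "(1 - \<alpha>/2) * r * (1 + r) \<le> r * (1 + \<alpha> + (1 - \<alpha>/2) * r)" using e by linarith
      moreover have "0 < 1 + \<alpha> + (1 - \<alpha>/2) * r" using den_pos[of \<alpha> r] assms rp by simp
      ultimately show ?thesis using rp by (simp add: divide_simps)
    qed
    have "r / (1 + r) < 1/3"
    proof -
      have "3 * r < 1 + r" using rl by simp
      then show ?thesis using rp by (simp add: divide_simps)
    qed
    then show ?thesis unfolding FX_alt using u by linarith
  qed
  have s1: "sqrt (FX \<alpha> r) < 1" using X1 by simp
  have "1 / (r^2 * (1 + r)) < 5" using F0 s1 unfolding FF_def by linarith
  moreover have "r^2 * (1 + r) < 1/5"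
  proof -
    have "r^2 * (1 + r) \<le> (19/50)^2 * (1 + 19/50)" using rl rp
      by (intro mult_mono power_mono) auto
    moreover have "(19/50::real)^2 * (1 + 19/50) < 1/5" by (simp add: power2_eq_square)
    ultimately show ?thesis by linarith
  qed
  moreover have xp: "0 < r^2 * (1 + r)" using rp by simp
  ultimately have "5 * (r^2 * (1 + r)) < 1" by simp
  then have "5 < 1 / (r^2 * (1 + r))" using xp by (simp add: less_divide_eq)
  then show False using \<open>1 / (r^2 * (1 + r)) < 5\<close> by simp
qed

definition mesh :: "(nat \<Rightarrow> real) \<Rightarrow> nat \<Rightarrow> bool" where
  "mesh t N \<longleftrightarrow> (\<forall>k\<in>{1..N}. t (k - 1) < t k)"

lemma tau_pos: "mesh t N \<Longrightarrow> 1 \<le> k \<Longrightarrow> k \<le> N \<Longrightarrow> 0 < tau t k"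
  unfolding mesh_def tau_def by auto

lemma t_less: "mesh t N \<Longrightarrow> i < j \<Longrightarrow> j \<le> N \<Longrightarrow> t i < t j"
proof (induction j)
  case 0 then show ?case by simp
next
  case (Suc j)
  have s: "t j < t (Suc j)" using Suc.prems unfolding mesh_def by (metis atLeastAtMost_iff diff_Suc_1 le_add1 plus_1_eq_Suc)
  show ?case
  proof (cases "i = j")
    case True then show ?thesis using s by simp
  next
    case False
    then have "i < j" using Suc.prems by simp
    then have "t i < t j" using Suc by simp
    then show ?thesis using s by simp
  qed
qed

lemma t_le: "mesh t N \<Longrightarrow> i \<le> j \<Longrightarrow> j \<le> N \<Longrightarrow> t i \<le> t j"
  using t_less[of t N i j] by (cases "i = j") auto

lemma tth_eq: "1 \<le> n \<Longrightarrow> tth \<alpha> t n = t (n - 1) + (1 - \<alpha>/2) * tau t n"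
  unfolding tth_def tau_def by (simp add: algebra_simps)

lemma tth_bounds:
  assumes "mesh t N" "1 \<le> n" "n \<le> N" "0 < \<alpha>" "\<alpha> < 1"
  shows "t (n - 1) < tth \<alpha> t n" "tth \<alpha> t n \<le> t n"
proof -
  have tp: "0 < tau t n" using tau_pos assms by simp
  have "0 < (1 - \<alpha>/2) * tau t n" using tp assms by simp
  then show "t (n - 1) < tth \<alpha> t n" using tth_eq[OF assms(2)] by simp
  have "(1 - \<alpha>/2) * tau t n \<le> tau t n" using tp assms by (simp add: mult_le_cancel_right1)
  then show "tth \<alpha> t n \<le> t n" using tth_eq[OF assms(2)] unfolding tau_def by simp
qed

definition PPk :: "real \<Rightarrow> real \<Rightarrow> (nat \<Rightarrow> real) \<Rightarrow> nat \<Rightarrow> real" where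
  "PPk \<alpha> c t k = integral {t (k - 1)..t k} (gg \<alpha> c)"
definition QQk :: "real \<Rightarrow> real \<Rightarrow> (nat \<Rightarrow> real) \<Rightarrow> nat \<Rightarrow> real" where
  "QQk \<alpha> c t k = integral {t (k - 1)..t k} (\<lambda>s. (s - (t (k - 1) + t k)/2) * gg \<alpha> c s)"
definition psiR :: "real \<Rightarrow> (nat \<Rightarrow> real) \<Rightarrow> real \<Rightarrow> nat \<Rightarrow> real" where
  "psiR \<alpha> t c k = PPk \<alpha> c t k / tau t k - 2 * QQk \<alpha> c t k / (tau t k * (tau t k + tau t (k + 1)))"
definition psiL :: "real \<Rightarrow> (nat \<Rightarrow> real) \<Rightarrow> real \<Rightarrow> nat \<Rightarrow> real" where
  "psiL \<alpha> t c k = 2 * QQk \<alpha> c t (k - 1) / (tau t k * (tau t (k - 1) + tau t k))"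

lemma varpi'_gg: "varpi' \<alpha> t n = gg \<alpha> (tth \<alpha> t n)"
  unfolding varpi'_def omega_def gg_def by (rule ext) simp

lemma alg1:
  fixes a b Q :: real assumes "0 < a" "0 < b"
  shows "(2/a^2*Q)/((b/a)*(1+b/a)) = 2*Q/(b*(a+b))"
proof -
  obtain S where S: "S = a+b" by blast
  have Sp: "S > 0" using S assms by simp
  have "1 + b/a = S/a" using assms S by (simp add: field_simps)
  then show ?thesis unfolding S[symmetric] using assms Sp by (simp add: field_simps power2_eq_square)
qed

lemma alg2:
  fixes b c Q :: real assumes "0 < b" "0 < c"
  shows "(2/b^2*Q)/(1 + c/b) = 2*Q/(b*(b+c))"
proof -
  obtain S where S: "S = b+c" by blast
  have Sp: "S > 0" using S assms by simp
  have "1 + c/b = S/b" using assms S by (simp add: field_simps)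
  then show ?thesis unfolding S[symmetric] using assms Sp by (simp add: field_simps power2_eq_square)
qed

context
  fixes \<alpha> :: real and t :: "nat \<Rightarrow> real" and N :: nat
  assumes al: "0 < \<alpha>" "\<alpha> < 1" and ms: "mesh t N"
begin

lemma acoef_mid:
  assumes "1 \<le> k" "k < n" "n \<le> N"
  shows "acoef \<alpha> t n (n - k) = PPk \<alpha> (tth \<alpha> t n) t k / tau t k"
proof -
  have nk: "n - (n - k) = k" using assms by simp
  have "t k \<le> t (n - 1)" using t_le[OF ms, of k "n-1"] assms by simp
  moreover have "t (n - 1) < tth \<alpha> t n" using tth_bounds[OF ms _ _ al] assms by simp
  ultimately have "min (t k) (tth \<alpha> t n) = t k" by simp
  then show ?thesis unfolding acoef_def Let_def nk varpi'_gg PPk_def by simp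
qed

lemma zeta_mid:
  assumes "1 \<le> k" "k < n" "n \<le> N"
  shows "zeta \<alpha> t n (n - k) = 2 / (tau t k)^2 * QQk \<alpha> (tth \<alpha> t n) t k"
proof -
  have nk: "n - (n - k) = k" using assms by simp
  show ?thesis unfolding zeta_def Let_def nk varpi'_gg QQk_def by simp
qed

lemma acoef_top:
  assumes "1 \<le> n" "n \<le> N"
  shows "2 * (1 - \<alpha>) / (2 - \<alpha>) * acoef \<alpha> t n 0 = gg \<alpha> (tth \<alpha> t n) (t (n - 1))"
proof -
  define c where "c = tth \<alpha> t n"
  define \<tau> where "\<tau> = tau t n"
  have tp: "0 < \<tau>" unfolding \<tau>_def using tau_pos[OF ms] assms by simp
  have cb: "t (n - 1) < c" "c \<le> t n" unfolding c_def using tth_bounds[OF ms assms al] by auto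
  have ce: "c - t (n - 1) = (1 - \<alpha>/2) * \<tau>" unfolding c_def \<tau>_def using tth_eq[OF assms(1)] by simp
  have G: "Gamma (1 - \<alpha>) > 0" using al Gp by simp
  have "acoef \<alpha> t n 0 = (1 / \<tau>) * integral {t (n - 1)..c} (gg \<alpha> c)"
    unfolding acoef_def Let_def varpi'_gg c_def[symmetric] \<tau>_def using cb by simp
  also have "\<dots> = (1 / \<tau>) * ((c - t (n - 1)) powr (1 - \<alpha>) / ((1 - \<alpha>) * Gamma (1 - \<alpha>)))"
    using top_int[OF al cb(1)] by simp
  finally have a: "acoef \<alpha> t n 0 = (1 / \<tau>) * ((c - t (n - 1)) powr (1 - \<alpha>) / ((1 - \<alpha>) * Gamma (1 - \<alpha>)))" .
  define x where "x = c - t (n - 1)"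
  have xp: "0 < x" unfolding x_def using cb by simp
  have xe: "x = (1 - \<alpha>/2) * \<tau>" unfolding x_def using ce .
  have pw: "x powr (1 - \<alpha>) = x * x powr (-\<alpha>)" using xp by (simp add: powr_diff powr_minus_divide)
  obtain A B Gm where AB: "A = 1 - \<alpha>" "B = 2 - \<alpha>" "Gm = Gamma (1 - \<alpha>)" by blast
  have ABp: "0 < A" "0 < B" "0 < Gm" using AB al G by auto
  have "2 * (1 - \<alpha>) / (2 - \<alpha>) * acoef \<alpha> t n 0 = 2 * A / B * ((1 / \<tau>) * (x powr (1 - \<alpha>) / (A * Gm)))"
    unfolding a x_def[symmetric] AB by simp
  also have "\<dots> = 2 * x powr (1 - \<alpha>) / (B * \<tau> * Gm)" using ABp tp by (simp add: field_simps)
  also have "\<dots> = (2 * x) * x powr (-\<alpha>) / (B * \<tau> * Gm)" unfolding pw by simp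
  also have "\<dots> = x powr (-\<alpha>) / Gm"
  proof -
    have "2 * x = B * \<tau>" unfolding xe AB by (simp add: algebra_simps)
    then show ?thesis using ABp tp by (simp add: field_simps)
  qed
  finally have "2 * (1 - \<alpha>) / (2 - \<alpha>) * acoef \<alpha> t n 0 = x powr (-\<alpha>) / Gamma (1 - \<alpha>)" unfolding AB .
  then show ?thesis unfolding gg_def x_def c_def .
qed

lemma Akern_mid:
  assumes "1 \<le> k" "k < n" "n \<le> N"
  shows "Akern \<alpha> t n (n - k) = psiR \<alpha> t (tth \<alpha> t n) k + (if 2 \<le> k then psiL \<alpha> t (tth \<alpha> t n) k else 0)"
proof -
  define c where "c = tth \<alpha> t n"
  have j0: "n - k \<noteq> 0" using assms by simp
  have tk: "0 < tau t k" "0 < tau t (k + 1)" using tau_pos[OF ms] assms by auto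
  have rk1: "ratio t (n - (n - k) + 1) = tau t (k + 1) / tau t k"
    using assms unfolding ratio_def by simp
  have R: "acoef \<alpha> t n (n - k) - zeta \<alpha> t n (n - k) / (1 + ratio t (n - (n - k) + 1)) = psiR \<alpha> t c k"
    unfolding acoef_mid[OF assms] zeta_mid[OF assms] rk1 psiR_def c_def alg2[OF tk] by simp
  show ?thesis
  proof (cases "k = 1")
    case True
    then have "n - k = n - 1" by simp
    moreover have "ratio t 2 = tau t 2 / tau t 1" unfolding ratio_def by simp
    ultimately show ?thesis using R True j0 unfolding Akern_def ahat_def c_def by (simp add: numeral_2_eq_2)
  next
    case False
    then have k2: "2 \<le> k" using assms by simp
    have jn: "n - k \<noteq> n - 1" using k2 assms by simp
    have a1: "1 \<le> k - 1" "k - 1 < n" using k2 assms by auto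
    have nj: "n - k + 1 = n - (k - 1)" using k2 assms by simp
    have tk1: "0 < tau t (k - 1)" using tau_pos[OF ms, of "k-1"] k2 assms by simp
    have rk: "ratio t (n - (n - k)) = tau t k / tau t (k - 1)" using assms unfolding ratio_def by simp
    have L: "zeta \<alpha> t n (n - k + 1) / (ratio t (n - (n - k)) * (1 + ratio t (n - (n - k)))) = psiL \<alpha> t c k"
      unfolding nj zeta_mid[OF a1 assms(3)] rk psiL_def c_def alg1[OF tk1 tk(1)] by simp
    have "Akern \<alpha> t n (n - k) = acoef \<alpha> t n (n - k) + zeta \<alpha> t n (n - k + 1) / (ratio t (n - (n - k)) * (1 + ratio t (n - (n - k))))
        - zeta \<alpha> t n (n - k) / (1 + ratio t (n - (n - k) + 1))"
      unfolding Akern_def ahat_def using j0 jn by simp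
    then show ?thesis using R L k2 unfolding c_def by simp
  qed
qed

lemma Akern_top:
  assumes "1 \<le> n" "n \<le> N"
  shows "Akern \<alpha> t n 0 = 2 * (gg \<alpha> (tth \<alpha> t n) (t (n - 1)) + (if 2 \<le> n then psiL \<alpha> t (tth \<alpha> t n) n else 0))"
proof (cases "2 \<le> n")
  case False
  then show ?thesis unfolding Akern_def ahat_def using acoef_top[OF assms] by simp
next
  case True
  have a1: "1 \<le> n - 1" "n - 1 < n" using True by auto
  have n1: "n - (n - 1) = 1" using True by simp
  have tk: "0 < tau t (n - 1)" "0 < tau t n" using tau_pos[OF ms] True assms by auto
  have z: "zeta \<alpha> t n 1 = 2 / (tau t (n - 1))^2 * QQk \<alpha> (tth \<alpha> t n) t (n - 1)"
    using zeta_mid[OF a1 assms(2)] unfolding n1 .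
  have r: "ratio t n = tau t n / tau t (n - 1)" unfolding ratio_def ..
  have "zeta \<alpha> t n 1 / (ratio t n * (1 + ratio t n)) = psiL \<alpha> t (tth \<alpha> t n) n"
    unfolding z r alg1[OF tk] psiL_def ..
  then show ?thesis unfolding Akern_def ahat_def using acoef_top[OF assms] True by simp
qed

end

lemma mesh_Gint:
  fixes f f1 f2 :: "real \<Rightarrow> real" and P Q :: "nat \<Rightarrow> real"
  assumes ms: "mesh t N" and k: "2 \<le> k" "k + 1 \<le> N"
    and gd: "good f f1 f2 (t (k - 3)) (t k)"
    and iP: "\<And>j. 1 \<le> j \<Longrightarrow> j \<le> k \<Longrightarrow> (f has_integral P j) {t (j - 1)..t j}"
    and iQ: "\<And>j. 1 \<le> j \<Longrightarrow> j \<le> k \<Longrightarrow> ((\<lambda>s. (s - (t (j - 1) + t j)/2) * f s) has_integral Q j) {t (j - 1)..t j}"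
    and r: "3 \<le> k \<Longrightarrow> 19 * tau t (k - 2) \<le> 50 * tau t (k - 1)"
  shows "0 \<le> (P k / tau t k - 2 * Q k / (tau t k * (tau t k + tau t (k + 1)))) + 2 * Q (k - 1) / (tau t k * (tau t (k - 1) + tau t k))
     - ((P (k - 1) / tau t (k - 1) - 2 * Q (k - 1) / (tau t (k - 1) * (tau t (k - 1) + tau t k)))
        + (if 3 \<le> k then 2 * Q (k - 2) / (tau t (k - 1) * (tau t (k - 2) + tau t (k - 1))) else 0))"
proof -
  have t4: "0 < tau t (k + 1)" using tau_pos[OF ms] k by simp
  have o: "t (k - 2) < t (k - 1)" "t (k - 1) < t k" using t_less[OF ms] k by auto
  have e1: "k - 1 - 1 = k - 2" by simp
  have P2: "(f has_integral P (k - 1)) {t (k - 2)..t (k - 1)}" using iP[of "k-1"] k e1 by simp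
  have Q2: "((\<lambda>s. (s - (t (k - 2) + t (k - 1))/2) * f s) has_integral Q (k - 1)) {t (k - 2)..t (k - 1)}"
    using iQ[of "k-1"] k e1 by simp
  have P3: "(f has_integral P k) {t (k - 1)..t k}" using iP[of k] k by simp
  have Q3: "((\<lambda>s. (s - (t (k - 1) + t k)/2) * f s) has_integral Q k) {t (k - 1)..t k}" using iQ[of k] k by simp
  show ?thesis
  proof (cases "3 \<le> k")
    case True
    have e2: "k - 2 - 1 = k - 3" by simp
    have o0: "t (k - 3) < t (k - 2)" using t_less[OF ms] k True by auto
    have P1: "(f has_integral P (k - 2)) {t (k - 3)..t (k - 2)}" using iP[of "k-2"] k True e2 by simp
    have Q1: "((\<lambda>s. (s - (t (k - 3) + t (k - 2))/2) * f s) has_integral Q (k - 2)) {t (k - 3)..t (k - 2)}"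
      using iQ[of "k-2"] k True e2 by simp
    have td: "tau t (k - 2) = t (k - 2) - t (k - 3)" "tau t (k - 1) = t (k - 1) - t (k - 2)" "tau t k = t k - t (k - 1)"
      unfolding tau_def using e1 e2 by simp_all
    show ?thesis using Gint3[OF gd o0 o td t4 r[OF True] P1 Q1 P2 Q2 P3 Q3] True by simp
  next
    case False
    then have k2: "k = 2" using k by simp
    have gd': "good f f1 f2 (t (k - 2)) (t k)" using gd k2 by simp
    have td: "tau t (k - 1) = t (k - 1) - t (k - 2)" "tau t k = t k - t (k - 1)"
      unfolding tau_def using e1 by simp_all
    show ?thesis using Gint2[OF gd' o td t4 P2 Q2 P3 Q3] False by simp
  qed
qed

lemma mesh_TopL:
  fixes f f1 f2 :: "real \<Rightarrow> real" and P Q :: "nat \<Rightarrow> real"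
  assumes ms: "mesh t N" and k: "2 \<le> k" "k \<le> N" and mu: "0 \<le> \<mu>"
    and gd: "good f f1 f2 (t (k - 3)) (t (k - 1))"
    and iP: "\<And>j. 1 \<le> j \<Longrightarrow> j \<le> k - 1 \<Longrightarrow> (f has_integral P j) {t (j - 1)..t j}"
    and iQ: "\<And>j. 1 \<le> j \<Longrightarrow> j \<le> k - 1 \<Longrightarrow> ((\<lambda>s. (s - (t (j - 1) + t j)/2) * f s) has_integral Q j) {t (j - 1)..t j}"
    and r: "3 \<le> k \<Longrightarrow> 19 * tau t (k - 2) \<le> 50 * tau t (k - 1)"
  shows "0 \<le> 2 * f (t (k - 1)) + \<mu> * (2 * Q (k - 1) / (tau t k * (tau t (k - 1) + tau t k)))
     - ((P (k - 1) / tau t (k - 1) - 2 * Q (k - 1) / (tau t (k - 1) * (tau t (k - 1) + tau t k)))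
        + (if 3 \<le> k then 2 * Q (k - 2) / (tau t (k - 1) * (tau t (k - 2) + tau t (k - 1))) else 0))"
proof -
  have t3: "0 < tau t k" using tau_pos[OF ms] k by simp
  have o: "t (k - 2) < t (k - 1)" using t_less[OF ms] k by auto
  have e1: "k - 1 - 1 = k - 2" by simp
  have P2: "(f has_integral P (k - 1)) {t (k - 2)..t (k - 1)}" using iP[of "k-1"] k e1 by simp
  have Q2: "((\<lambda>s. (s - (t (k - 2) + t (k - 1))/2) * f s) has_integral Q (k - 1)) {t (k - 2)..t (k - 1)}"
    using iQ[of "k-1"] k e1 by simp
  show ?thesis
  proof (cases "3 \<le> k")
    case True
    have e2: "k - 2 - 1 = k - 3" by simp
    have o0: "t (k - 3) < t (k - 2)" using t_less[OF ms] k True by auto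
    have P1: "(f has_integral P (k - 2)) {t (k - 3)..t (k - 2)}" using iP[of "k-2"] k True e2 by simp
    have Q1: "((\<lambda>s. (s - (t (k - 3) + t (k - 2))/2) * f s) has_integral Q (k - 2)) {t (k - 3)..t (k - 2)}"
      using iQ[of "k-2"] k True e2 by simp
    have td: "tau t (k - 2) = t (k - 2) - t (k - 3)" "tau t (k - 1) = t (k - 1) - t (k - 2)"
      unfolding tau_def using e1 e2 by simp_all
    show ?thesis using TopL3[OF gd o0 o td t3 mu r[OF True] P1 Q1 P2 Q2] True by simp
  next
    case False
    then have k2: "k = 2" using k by simp
    have gd': "good f f1 f2 (t (k - 2)) (t (k - 1))" using gd k2 by simp
    have td: "tau t (k - 1) = t (k - 1) - t (k - 2)"
      unfolding tau_def using e1 by simp_all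
    show ?thesis using TopL2[OF gd' o td t3 mu P2 Q2] False by simp
  qed
qed

context
  fixes \<alpha> :: real and t :: "nat \<Rightarrow> real" and N :: nat
  assumes al: "0 < \<alpha>" "\<alpha> < 1" and ms: "mesh t N"
    and rat: "\<forall>k\<in>{2..N}. rstar \<alpha> \<le> ratio t k"
begin

lemma r19: "2 \<le> k \<Longrightarrow> k \<le> N \<Longrightarrow> 19 * tau t (k - 1) \<le> 50 * tau t k"
proof -
  assume k: "2 \<le> k" "k \<le> N"
  have p: "0 < tau t (k - 1)" "0 < tau t k" using tau_pos[OF ms] k by auto
  have "rstar \<alpha> \<le> ratio t k" using rat k by simp
  then have "19/50 \<le> tau t k / tau t (k - 1)" using rstar_ge[OF al] unfolding ratio_def by linarith
  then have "19/50 * tau t (k - 1) \<le> tau t k" using p by (simp add: le_divide_eq)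
  then show ?thesis by simp
qed

lemma iPg: "1 \<le> j \<Longrightarrow> t j < c \<Longrightarrow> (gg \<alpha> c has_integral PPk \<alpha> c t j) {t (j - 1)..t j}"
  unfolding PPk_def by (rule gg_int)

lemma iQg: "1 \<le> j \<Longrightarrow> t j < c \<Longrightarrow> ((\<lambda>s. (s - (t (j - 1) + t j)/2) * gg \<alpha> c s) has_integral QQk \<alpha> c t j) {t (j - 1)..t j}"
  unfolding QQk_def by (rule ggm_int)

lemma iPh: "1 \<le> j \<Longrightarrow> t j < c' \<Longrightarrow> c' \<le> c \<Longrightarrow>
   ((\<lambda>s. gg \<alpha> c' s - gg \<alpha> c s) has_integral (PPk \<alpha> c' t j - PPk \<alpha> c t j)) {t (j - 1)..t j}"
  by (intro has_integral_diff iPg) auto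

lemma iQh: "1 \<le> j \<Longrightarrow> t j < c' \<Longrightarrow> c' \<le> c \<Longrightarrow>
   ((\<lambda>s. (s - (t (j - 1) + t j)/2) * (gg \<alpha> c' s - gg \<alpha> c s)) has_integral (QQk \<alpha> c' t j - QQk \<alpha> c t j)) {t (j - 1)..t j}"
proof -
  assume a: "1 \<le> j" "t j < c'" "c' \<le> c"
  have "((\<lambda>s. (s - (t (j - 1) + t j)/2) * gg \<alpha> c' s - (s - (t (j - 1) + t j)/2) * gg \<alpha> c s) has_integral (QQk \<alpha> c' t j - QQk \<alpha> c t j)) {t (j - 1)..t j}"
    using a by (intro has_integral_diff iQg) auto
  then show ?thesis by (simp add: right_diff_distrib)
qed

lemma tth_sep: "2 \<le> n \<Longrightarrow> n \<le> N \<Longrightarrow> t (n - 2) < tth \<alpha> t (n - 1) \<and> tth \<alpha> t (n - 1) \<le> tth \<alpha> t n"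
proof -
  assume n: "2 \<le> n" "n \<le> N"
  have a: "t (n - 1 - 1) < tth \<alpha> t (n - 1)" "tth \<alpha> t (n - 1) \<le> t (n - 1)"
    using tth_bounds[OF ms _ _ al, of "n-1"] n by auto
  have b: "t (n - 1) < tth \<alpha> t n" using tth_bounds[OF ms _ _ al, of n] n by auto
  have "n - 1 - 1 = n - 2" by simp
  then show ?thesis using a b by simp
qed

lemma G_mid:
  assumes n: "n \<le> N" and k: "2 \<le> k" "k \<le> n - 1"
  shows "Akern \<alpha> t n (n - (k - 1)) \<le> Akern \<alpha> t n (n - k)"
proof -
  define c where "c = tth \<alpha> t n"
  have tkc: "t k < c" unfolding c_def using t_le[OF ms, of k "n-1"] tth_bounds[OF ms _ _ al, of n] n k by force
  have A1: "Akern \<alpha> t n (n - k) = psiR \<alpha> t c k + psiL \<alpha> t c k"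
    using Akern_mid[OF al ms, of k n] n k unfolding c_def by simp
  have A2: "Akern \<alpha> t n (n - (k - 1)) = psiR \<alpha> t c (k - 1) + (if 3 \<le> k then psiL \<alpha> t c (k - 1) else 0)"
    using Akern_mid[OF al ms, of "k-1" n] n k unfolding c_def by auto
  have gd: "good (gg \<alpha> c) (gg1 \<alpha> c) (gg2 \<alpha> c) (t (k - 3)) (t k)" using good_gg[OF al tkc] .
  have M: "0 \<le> (PPk \<alpha> c t k / tau t k - 2 * QQk \<alpha> c t k / (tau t k * (tau t k + tau t (k + 1)))) + 2 * QQk \<alpha> c t (k - 1) / (tau t k * (tau t (k - 1) + tau t k))
     - ((PPk \<alpha> c t (k - 1) / tau t (k - 1) - 2 * QQk \<alpha> c t (k - 1) / (tau t (k - 1) * (tau t (k - 1) + tau t k)))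
        + (if 3 \<le> k then 2 * QQk \<alpha> c t (k - 2) / (tau t (k - 1) * (tau t (k - 2) + tau t (k - 1))) else 0))"
  proof (rule mesh_Gint[OF ms k(1) _ gd])
    show "k + 1 \<le> N" using n k by simp
    fix j assume j: "1 \<le> j" "j \<le> k"
    then have "t j < c" using t_le[OF ms, of j k] n k tkc by force
    then show "(gg \<alpha> c has_integral PPk \<alpha> c t j) {t (j - 1)..t j}"
      "((\<lambda>s. (s - (t (j - 1) + t j)/2) * gg \<alpha> c s) has_integral QQk \<alpha> c t j) {t (j - 1)..t j}"
      using iPg iQg j by auto
  next
    assume "3 \<le> k"
    moreover have "k - 1 - 1 = k - 2" by simp
    ultimately show "19 * tau t (k - 2) \<le> 50 * tau t (k - 1)" using r19[of "k-1"] n k by simp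
  qed
  have e: "k - 1 + 1 = k" "k - 1 - 1 = k - 2" using k by auto
  show ?thesis using M unfolding A1 A2 psiR_def psiL_def e by simp
qed

lemma G_top:
  assumes n: "2 \<le> n" "n \<le> N"
  shows "Akern \<alpha> t n 1 \<le> Akern \<alpha> t n 0"
proof -
  define c where "c = tth \<alpha> t n"
  have tkc: "t (n - 1) < c" unfolding c_def using tth_bounds[OF ms _ _ al, of n] n by force
  have A0: "Akern \<alpha> t n 0 = 2 * (gg \<alpha> c (t (n - 1)) + psiL \<alpha> t c n)"
    using Akern_top[OF al ms, of n] n unfolding c_def by simp
  have A1: "Akern \<alpha> t n 1 = psiR \<alpha> t c (n - 1) + (if 3 \<le> n then psiL \<alpha> t c (n - 1) else 0)"
    using Akern_mid[OF al ms, of "n-1" n] n unfolding c_def by auto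
  have gd: "good (gg \<alpha> c) (gg1 \<alpha> c) (gg2 \<alpha> c) (t (n - 3)) (t (n - 1))" using good_gg[OF al tkc] .
  have M: "0 \<le> 2 * gg \<alpha> c (t (n - 1)) + 2 * (2 * QQk \<alpha> c t (n - 1) / (tau t n * (tau t (n - 1) + tau t n)))
     - ((PPk \<alpha> c t (n - 1) / tau t (n - 1) - 2 * QQk \<alpha> c t (n - 1) / (tau t (n - 1) * (tau t (n - 1) + tau t n)))
        + (if 3 \<le> n then 2 * QQk \<alpha> c t (n - 2) / (tau t (n - 1) * (tau t (n - 2) + tau t (n - 1))) else 0))"
  proof (rule mesh_TopL[OF ms n _ gd])
    fix j assume j: "1 \<le> j" "j \<le> n - 1"
    then have "t j < c" using t_le[OF ms, of j "n-1"] n tkc by force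
    then show "(gg \<alpha> c has_integral PPk \<alpha> c t j) {t (j - 1)..t j}"
      "((\<lambda>s. (s - (t (j - 1) + t j)/2) * gg \<alpha> c s) has_integral QQk \<alpha> c t j) {t (j - 1)..t j}"
      using iPg iQg j by auto
  next
    assume "3 \<le> n"
    moreover have "n - 1 - 1 = n - 2" by simp
    ultimately show "19 * tau t (n - 2) \<le> 50 * tau t (n - 1)" using r19[of "n-1"] n by simp
  qed simp
  have e: "n - 1 + 1 = n" "n - 1 - 1 = n - 2" using n by auto
  show ?thesis using M unfolding A0 A1 psiR_def psiL_def e by simp
qed

lemma G_pos:
  assumes n: "1 \<le> n" "n \<le> N"
  shows "0 \<le> Akern \<alpha> t n (n - 1)"
proof (cases "n = 1")
  case True
  have "Akern \<alpha> t n (n - 1) = 2 * gg \<alpha> (tth \<alpha> t n) (t 0)" using Akern_top[OF al ms, of n] n True by simp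
  moreover have "0 \<le> gg \<alpha> (tth \<alpha> t n) (t 0)" unfolding gg_def using Gp[OF al(2)] by simp
  ultimately show ?thesis by simp
next
  case False
  define c where "c = tth \<alpha> t n"
  have A: "Akern \<alpha> t n (n - 1) = psiR \<alpha> t c 1" using Akern_mid[OF al ms, of 1 n] n False unfolding c_def by simp
  have t1c: "t 1 < c" unfolding c_def using t_le[OF ms, of 1 "n-1"] tth_bounds[OF ms _ _ al, of n] n False by force
  have o: "t 0 < t 1" using t_less[OF ms, of 0 1] n False by simp
  have "0 \<le> PPk \<alpha> c t 1 / (t 1 - t 0) - 2 * QQk \<alpha> c t 1 / ((t 1 - t 0) * ((t 1 - t 0) + tau t 2))"
    using psiR_nonneg[OF good_gg[OF al t1c] o, of "tau t 2"] iPg[of 1 c] iQg[of 1 c] t1c tau_pos[OF ms, of 2] n False by simp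
  then show ?thesis unfolding A psiR_def tau_def by (simp add: numeral_2_eq_2)
qed

lemma R_mid:
  assumes n: "n \<le> N" and k: "2 \<le> k" "k \<le> n - 2"
  shows "0 \<le> (Akern \<alpha> t (n - 1) (n - 1 - k) - Akern \<alpha> t (n - 1) (n - 1 - (k - 1)))
             - (Akern \<alpha> t n (n - k) - Akern \<alpha> t n (n - (k - 1)))"
proof -
  define c where "c = tth \<alpha> t n"
  define c' where "c' = tth \<alpha> t (n - 1)"
  have cc: "t (n - 2) < c'" "c' \<le> c" unfolding c_def c'_def using tth_sep[of n] n k by auto
  have tkc: "t k < c'" using t_le[OF ms, of k "n-2"] n k cc by force
  have A1: "Akern \<alpha> t n (n - k) = psiR \<alpha> t c k + psiL \<alpha> t c k"
    using Akern_mid[OF al ms, of k n] n k unfolding c_def by simp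
  have A2: "Akern \<alpha> t n (n - (k - 1)) = psiR \<alpha> t c (k - 1) + (if 3 \<le> k then psiL \<alpha> t c (k - 1) else 0)"
    using Akern_mid[OF al ms, of "k-1" n] n k unfolding c_def by auto
  have B1: "Akern \<alpha> t (n - 1) (n - 1 - k) = psiR \<alpha> t c' k + psiL \<alpha> t c' k"
    using Akern_mid[OF al ms, of k "n-1"] n k unfolding c'_def by simp
  have B2: "Akern \<alpha> t (n - 1) (n - 1 - (k - 1)) = psiR \<alpha> t c' (k - 1) + (if 3 \<le> k then psiL \<alpha> t c' (k - 1) else 0)"
    using Akern_mid[OF al ms, of "k-1" "n-1"] n k unfolding c'_def by auto
  have gd: "good (\<lambda>s. gg \<alpha> c' s - gg \<alpha> c s) (\<lambda>s. gg1 \<alpha> c' s - gg1 \<alpha> c s) (\<lambda>s. gg2 \<alpha> c' s - gg2 \<alpha> c s) (t (k - 3)) (t k)"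
    using good_diff[OF al tkc cc(2)] .
  have M: "0 \<le> ((PPk \<alpha> c' t k - PPk \<alpha> c t k) / tau t k - 2 * (QQk \<alpha> c' t k - QQk \<alpha> c t k) / (tau t k * (tau t k + tau t (k + 1))))
     + 2 * (QQk \<alpha> c' t (k - 1) - QQk \<alpha> c t (k - 1)) / (tau t k * (tau t (k - 1) + tau t k))
     - (((PPk \<alpha> c' t (k - 1) - PPk \<alpha> c t (k - 1)) / tau t (k - 1) - 2 * (QQk \<alpha> c' t (k - 1) - QQk \<alpha> c t (k - 1)) / (tau t (k - 1) * (tau t (k - 1) + tau t k)))
        + (if 3 \<le> k then 2 * (QQk \<alpha> c' t (k - 2) - QQk \<alpha> c t (k - 2)) / (tau t (k - 1) * (tau t (k - 2) + tau t (k - 1))) else 0))"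
  proof (rule mesh_Gint[OF ms k(1) _ gd, where P="\<lambda>j. PPk \<alpha> c' t j - PPk \<alpha> c t j" and Q="\<lambda>j. QQk \<alpha> c' t j - QQk \<alpha> c t j"])
    show "k + 1 \<le> N" using n k by simp
    fix j assume j: "1 \<le> j" "j \<le> k"
    then have "t j < c'" using t_le[OF ms, of j k] n k tkc by force
    then show "((\<lambda>s. gg \<alpha> c' s - gg \<alpha> c s) has_integral (PPk \<alpha> c' t j - PPk \<alpha> c t j)) {t (j - 1)..t j}"
      "((\<lambda>s. (s - (t (j - 1) + t j)/2) * (gg \<alpha> c' s - gg \<alpha> c s)) has_integral (QQk \<alpha> c' t j - QQk \<alpha> c t j)) {t (j - 1)..t j}"
      using iPh iQh j cc by auto
  next
    assume "3 \<le> k"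
    moreover have "k - 1 - 1 = k - 2" by simp
    ultimately show "19 * tau t (k - 2) \<le> 50 * tau t (k - 1)" using r19[of "k-1"] n k by simp
  qed
  have e: "k - 1 + 1 = k" "k - 1 - 1 = k - 2" using k by auto
  show ?thesis using M unfolding A1 A2 B1 B2 psiR_def psiL_def e
    by (cases "3 \<le> k"; simp add: diff_divide_distrib right_diff_distrib; linarith)
qed

lemma R_top:
  assumes n: "3 \<le> n" "n \<le> N"
  shows "0 \<le> (Akern \<alpha> t (n - 1) 0 - Akern \<alpha> t (n - 1) 1) - (Akern \<alpha> t n 1 - Akern \<alpha> t n 2)"
proof -
  define c where "c = tth \<alpha> t n"
  define c' where "c' = tth \<alpha> t (n - 1)"
  have cc: "t (n - 2) < c'" "c' \<le> c" unfolding c_def c'_def using tth_sep[of n] n by auto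
  have e: "n - 1 - 1 = n - 2" "n - 2 - 1 = n - 3" "n - 1 + 1 = n" "n - 2 + 1 = n - 1" "n - 1 - 2 = n - 3"
    "n - 1 - 3 = n - 4" "n - (n - 2) = 2" "n - 1 - (n - 2) = 1" "n - (n - 1) = 1" using n by auto
  have B0: "Akern \<alpha> t (n - 1) 0 = 2 * (gg \<alpha> c' (t (n - 2)) + psiL \<alpha> t c' (n - 1))"
    using Akern_top[OF al ms, of "n-1"] n unfolding c'_def e by simp
  have B1: "Akern \<alpha> t (n - 1) 1 = psiR \<alpha> t c' (n - 2) + (if 4 \<le> n then psiL \<alpha> t c' (n - 2) else 0)"
    using Akern_mid[OF al ms, of "n-2" "n-1"] n unfolding c'_def e by auto
  have A1: "Akern \<alpha> t n 1 = psiR \<alpha> t c (n - 1) + psiL \<alpha> t c (n - 1)"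
    using Akern_mid[OF al ms, of "n-1" n] n unfolding c_def e by auto
  have A2: "Akern \<alpha> t n 2 = psiR \<alpha> t c (n - 2) + (if 4 \<le> n then psiL \<alpha> t c (n - 2) else 0)"
    using Akern_mid[OF al ms, of "n-2" n] n unfolding c_def e by auto
  have o32: "t (n - 3) < t (n - 2)" using t_less[OF ms, of "n-3" "n-2"] n by simp
  have a: "0 \<le> psiL \<alpha> t c' (n - 1)"
  proof -
    have "0 \<le> QQk \<alpha> c' t (n - 2)"
      using Q_nonneg[OF good_gg[OF al cc(1)] o32, of "PPk \<alpha> c' t (n - 2)"] iPg[of "n-2" c'] iQg[of "n-2" c'] cc n e by simp
    moreover have "0 < tau t (n - 1)" "0 < tau t (n - 2)" using tau_pos[OF ms] n by auto
    ultimately show ?thesis unfolding psiL_def e by simp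
  qed
  have b: "psiR \<alpha> t c (n - 1) \<le> 2 * gg \<alpha> c (t (n - 2))"
  proof -
    have o21: "t (n - 2) < t (n - 1)" using t_less[OF ms, of "n-2" "n-1"] n by simp
    have tn: "0 < tau t n" using tau_pos[OF ms] n by simp
    have ce: "c = t (n - 1) + (1 - \<alpha>/2) * tau t n" unfolding c_def using tth_eq[of n] n by simp
    have c1: "t (n - 1) + tau t n / 2 \<le> c" unfolding ce using al tn by (simp add: field_simps)
    have c2: "c \<le> t (n - 1) + tau t n" unfolding ce using al tn by (simp add: field_simps)
    have "tau t (n - 1) = t (n - 1) - t (n - 2)" unfolding tau_def e ..
    then show ?thesis using psiR_bound[OF al o21 tn c1 c2] unfolding psiR_def PPk_def QQk_def e by simp
  qed
  have gd: "good (\<lambda>s. gg \<alpha> c' s - gg \<alpha> c s) (\<lambda>s. gg1 \<alpha> c' s - gg1 \<alpha> c s) (\<lambda>s. gg2 \<alpha> c' s - gg2 \<alpha> c s) (t (n - 1 - 3)) (t (n - 1 - 1))"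
    using good_diff[OF al _ cc(2)] cc(1) e by simp
  have M: "0 \<le> 2 * (gg \<alpha> c' (t (n - 1 - 1)) - gg \<alpha> c (t (n - 1 - 1)))
     + 1 * (2 * (QQk \<alpha> c' t (n - 1 - 1) - QQk \<alpha> c t (n - 1 - 1)) / (tau t (n - 1) * (tau t (n - 1 - 1) + tau t (n - 1))))
     - (((PPk \<alpha> c' t (n - 1 - 1) - PPk \<alpha> c t (n - 1 - 1)) / tau t (n - 1 - 1)
         - 2 * (QQk \<alpha> c' t (n - 1 - 1) - QQk \<alpha> c t (n - 1 - 1)) / (tau t (n - 1 - 1) * (tau t (n - 1 - 1) + tau t (n - 1))))
        + (if 3 \<le> n - 1 then 2 * (QQk \<alpha> c' t (n - 1 - 2) - QQk \<alpha> c t (n - 1 - 2)) / (tau t (n - 1 - 1) * (tau t (n - 1 - 2) + tau t (n - 1 - 1))) else 0))"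
  proof (rule mesh_TopL[OF ms _ _ _ gd, where P="\<lambda>j. PPk \<alpha> c' t j - PPk \<alpha> c t j" and Q="\<lambda>j. QQk \<alpha> c' t j - QQk \<alpha> c t j"])
    show "2 \<le> n - 1" "n - 1 \<le> N" using n by auto
    fix j assume j: "1 \<le> j" "j \<le> n - 1 - 1"
    then have "t j < c'" using t_le[OF ms, of j "n-2"] n cc e by force
    then show "((\<lambda>s. gg \<alpha> c' s - gg \<alpha> c s) has_integral (PPk \<alpha> c' t j - PPk \<alpha> c t j)) {t (j - 1)..t j}"
      "((\<lambda>s. (s - (t (j - 1) + t j)/2) * (gg \<alpha> c' s - gg \<alpha> c s)) has_integral (QQk \<alpha> c' t j - QQk \<alpha> c t j)) {t (j - 1)..t j}"
      using iPh iQh j cc by auto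
  next
    assume "3 \<le> n - 1"
    then show "19 * tau t (n - 1 - 2) \<le> 50 * tau t (n - 1 - 1)" using r19[of "n-2"] n e by simp
  qed simp
  have M': "0 \<le> 2 * (gg \<alpha> c' (t (n - 2)) - gg \<alpha> c (t (n - 2)))
     + (psiL \<alpha> t c' (n - 1) - psiL \<alpha> t c (n - 1))
     - ((psiR \<alpha> t c' (n - 2) - psiR \<alpha> t c (n - 2)) + (if 4 \<le> n then psiL \<alpha> t c' (n - 2) - psiL \<alpha> t c (n - 2) else 0))"
  proof -
    have i: "(3 \<le> n - 1) = (4 \<le> n)" by auto
    show ?thesis using M unfolding psiR_def psiL_def e i
      by (cases "4 \<le> n"; simp add: diff_divide_distrib right_diff_distrib; linarith)
  qed
  show ?thesis unfolding B0 B1 A1 A2 using a b M' by (cases "4 \<le> n"; simp; linarith)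
qed

lemma R_last:
  assumes n: "2 \<le> n" "n \<le> N"
  shows "Akern \<alpha> t n (n - 1) \<le> Akern \<alpha> t (n - 1) (n - 2)"
proof -
  define c where "c = tth \<alpha> t n"
  define c' where "c' = tth \<alpha> t (n - 1)"
  have cc: "t (n - 2) < c'" "c' \<le> c" unfolding c_def c'_def using tth_sep[of n] n by auto
  have A: "Akern \<alpha> t n (n - 1) = psiR \<alpha> t c 1" using Akern_mid[OF al ms, of 1 n] n unfolding c_def by simp
  have o: "t 0 < t 1" using t_less[OF ms, of 0 1] n by simp
  have t2: "0 < tau t 2" using tau_pos[OF ms, of 2] n by simp
  show ?thesis
  proof (cases "n = 2")
    case True
    have B: "Akern \<alpha> t (n - 1) (n - 2) = 2 * gg \<alpha> c' (t 0)"
      using Akern_top[OF al ms, of "n-1"] n True unfolding c'_def by simp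
    have ce: "c = t 1 + (1 - \<alpha>/2) * tau t 2" unfolding c_def using tth_eq[of n] True by simp
    have c1: "t 1 + tau t 2 / 2 \<le> c" unfolding ce using al t2 by (simp add: field_simps)
    have c2: "c \<le> t 1 + tau t 2" unfolding ce using al t2 by (simp add: field_simps)
    have "psiR \<alpha> t c 1 \<le> 2 * gg \<alpha> c (t 0)"
      using psiR_bound[OF al o t2 c1 c2] unfolding psiR_def PPk_def QQk_def tau_def by (simp add: numeral_2_eq_2)
    moreover have "gg \<alpha> c (t 0) \<le> gg \<alpha> c' (t 0)"
      using goodD[OF good_diff[OF al _ cc(2)], of "t 0" "t 0" "t 0"] cc True by simp
    ultimately show ?thesis unfolding A B by simp
  next
    case False
    have B: "Akern \<alpha> t (n - 1) (n - 2) = psiR \<alpha> t c' 1"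
      using Akern_mid[OF al ms, of 1 "n-1"] n False unfolding c'_def by (simp add: numeral_2_eq_2)
    have t1c: "t 1 < c'" using t_le[OF ms, of 1 "n-2"] n False cc by force
    have "0 \<le> (PPk \<alpha> c' t 1 - PPk \<alpha> c t 1) / (t 1 - t 0) - 2 * (QQk \<alpha> c' t 1 - QQk \<alpha> c t 1) / ((t 1 - t 0) * ((t 1 - t 0) + tau t 2))"
    proof -
      have iP1: "((\<lambda>s. gg \<alpha> c' s - gg \<alpha> c s) has_integral (PPk \<alpha> c' t 1 - PPk \<alpha> c t 1)) {t 0..t 1}"
        using iPh[of 1 c' c] t1c cc by simp
      have iQ1: "((\<lambda>s. (s - (t 0 + t 1)/2) * (gg \<alpha> c' s - gg \<alpha> c s)) has_integral (QQk \<alpha> c' t 1 - QQk \<alpha> c t 1)) {t 0..t 1}"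
        using iQh[of 1 c' c] t1c cc by simp
      show ?thesis using psiR_nonneg[OF good_diff[OF al t1c cc(2)] o t2 iP1 iQ1] .
    qed
    then show ?thesis unfolding A B psiR_def tau_def
      by (simp add: numeral_2_eq_2 diff_divide_distrib right_diff_distrib)
  qed
qed

end

lemma AL:
  fixes C w :: "nat \<Rightarrow> real"
  shows "(\<Sum>j=1..m. (C (Suc j) - C j) * (\<Sum>l=Suc j..m. w l)) + C 1 * (\<Sum>l=1..m. w l) = (\<Sum>k=1..m. C k * w k)"
proof (induction m)
  case 0 show ?case by simp
next
  case (Suc m)
  have "(\<Sum>j=1..Suc m. (C (Suc j) - C j) * (\<Sum>l=Suc j..Suc m. w l))
      = (\<Sum>j=1..m. (C (Suc j) - C j) * (\<Sum>l=Suc j..Suc m. w l))" by simp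
  also have "\<dots> = (\<Sum>j=1..m. (C (Suc j) - C j) * (\<Sum>l=Suc j..m. w l) + (C (Suc j) - C j) * w (Suc m))"
    by (intro sum.cong) (auto simp: algebra_simps)
  also have "\<dots> = (\<Sum>j=1..m. (C (Suc j) - C j) * (\<Sum>l=Suc j..m. w l)) + (\<Sum>j=1..m. C (Suc j) - C j) * w (Suc m)"
    by (simp add: sum.distrib sum_distrib_right)
  also have "(\<Sum>j=1..m. C (Suc j) - C j) = C (Suc m) - C 1" by (rule sum_Suc_diff) simp
  finally have e: "(\<Sum>j=1..Suc m. (C (Suc j) - C j) * (\<Sum>l=Suc j..Suc m. w l))
      = (\<Sum>j=1..m. (C (Suc j) - C j) * (\<Sum>l=Suc j..m. w l)) + (C (Suc m) - C 1) * w (Suc m)" .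
  show ?case unfolding e using Suc.IH by (simp add: algebra_simps)
qed

lemma tele: "(\<Sum>j=1..m. (C (Suc j) - C j)) + C 1 = (C (Suc m) :: real)"
  using sum_Suc_diff[of 1 m C] by simp

definition GG :: "(nat \<Rightarrow> real) \<Rightarrow> nat \<Rightarrow> (nat \<Rightarrow> real) \<Rightarrow> real" where
  "GG A m w = (if m = 0 then 0 else
       (\<Sum>j = 1..m - 1. (A (m - j - 1) - A (m - j)) * (\<Sum>l = j + 1..m. w l)^2)
       + A (m - 1) * (\<Sum>l = 1..m. w l)^2)"

definition RR :: "(nat \<Rightarrow> real) \<Rightarrow> (nat \<Rightarrow> real) \<Rightarrow> nat \<Rightarrow> (nat \<Rightarrow> real) \<Rightarrow> real" where
  "RR B A m w = (if m \<le> 1 then 0 else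
       (\<Sum>j = 1..m - 1. (B (m - j - 2) - B (m - j - 1) - A (m - j - 1) + A (m - j))
            * (\<Sum>l = j + 1..m - 1. w l)^2)
       + (B (m - 2) - A (m - 1)) * (\<Sum>l = 1..m - 1. w l)^2)"

lemma Gfun_GG: "Gfun \<alpha> t m w = GG (Akern \<alpha> t m) m w"
  unfolding Gfun_def GG_def ..

lemma Rfun_RR: "Rfun \<alpha> t m w = RR (Akern \<alpha> t (m - 1)) (Akern \<alpha> t m) m w"
  unfolding Rfun_def RR_def ..

lemma I2:
  fixes A B w :: "nat \<Rightarrow> real"
  shows "GG A (Suc m) w - GG B m w + RR B A (Suc m) w
       = 2 * w (Suc m) * (\<Sum>k = 1..m. A (Suc m - k) * w k) + A 0 * (w (Suc m))^2"
proof -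
  define T where "T j = (\<Sum>l = j..m. w l)" for j
  define S where "S j = (\<Sum>l = j..Suc m. w l)" for j
  define w' where "w' = w (Suc m)"
  have ST: "S j = T j + w'" if "j \<le> Suc m" for j unfolding S_def T_def w'_def using that by simp
  have Tm: "T (Suc m) = 0" unfolding T_def by simp
  have GA: "GG A (Suc m) w = (\<Sum>j = 1..m. (A (m - j) - A (Suc m - j)) * (S (Suc j))^2) + A m * (S 1)^2"
    unfolding GG_def S_def by (auto intro!: sum.cong simp: Suc_diff_le)
  have GB: "GG B m w = (\<Sum>j = 1..m. (B (m - Suc j) - B (m - j)) * (T (Suc j))^2) + B (m - 1) * (T 1)^2"
  proof (cases m)
    case 0 then show ?thesis unfolding GG_def T_def by simp
  next
    case (Suc m0)
    have "(\<Sum>j = 1..m. (B (m - Suc j) - B (m - j)) * (T (Suc j))^2)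
        = (\<Sum>j = 1..m - 1. (B (m - Suc j) - B (m - j)) * (T (Suc j))^2)"
      using Suc Tm by simp
    then show ?thesis unfolding GG_def T_def using Suc by (auto intro!: sum.cong simp: Suc_diff_le)
  qed
  have RE: "RR B A (Suc m) w = (\<Sum>j = 1..m. (B (m - Suc j) - B (m - j) - A (m - j) + A (Suc m - j)) * (T (Suc j))^2)
        + (B (m - 1) - A m) * (T 1)^2"
  proof (cases m)
    case 0 then show ?thesis unfolding RR_def T_def by simp
  next
    case (Suc m0)
    then show ?thesis unfolding RR_def T_def
      by (auto intro!: sum.cong arg_cong2[where f="(+)"] simp: Suc_diff_le numeral_2_eq_2)
  qed
  have comb: "GG A (Suc m) w - GG B m w + RR B A (Suc m) w
     = (\<Sum>j = 1..m. (A (m - j) - A (Suc m - j)) * ((S (Suc j))^2 - (T (Suc j))^2)) + A m * ((S 1)^2 - (T 1)^2)"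
    unfolding GA GB RE
    by (simp add: sum_subtractf[symmetric] sum.distrib[symmetric] algebra_simps)
  also have "\<dots> = (\<Sum>j = 1..m. (A (m - j) - A (Suc m - j)) * (2 * w' * T (Suc j) + w'^2)) + A m * (2 * w' * T 1 + w'^2)"
    by (intro arg_cong2[where f="(+)"] sum.cong refl) (auto simp: ST power2_eq_square algebra_simps)
  also have "\<dots> = (\<Sum>j = 1..m. 2 * w' * ((A (m - j) - A (Suc m - j)) * T (Suc j)) + w'^2 * (A (m - j) - A (Suc m - j)))
       + (2 * w' * (A m * T 1) + w'^2 * A m)"
    by (intro arg_cong2[where f="(+)"] sum.cong refl) (simp_all add: algebra_simps)
  also have "\<dots> = 2 * w' * ((\<Sum>j = 1..m. (A (m - j) - A (Suc m - j)) * T (Suc j)) + A m * T 1)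
       + w'^2 * ((\<Sum>j = 1..m. (A (m - j) - A (Suc m - j))) + A m)"
    by (simp only: sum.distrib sum_distrib_left[symmetric]) (simp add: algebra_simps)
  also have "(\<Sum>j = 1..m. (A (m - j) - A (Suc m - j)) * T (Suc j)) + A m * T 1 = (\<Sum>k = 1..m. A (Suc m - k) * w k)"
    using AL[where m=m and w=w and C="\<lambda>j. A (Suc m - j)"] unfolding T_def by simp
  also have "(\<Sum>j = 1..m. (A (m - j) - A (Suc m - j))) + A m = A 0"
    using tele[where m=m and C="\<lambda>j. A (Suc m - j)"] by simp
  finally show ?thesis unfolding w'_def by (simp add: algebra_simps)
qed

lemma I1gen:
  fixes a z r w :: "nat \<Rightarrow> real"
  assumes "\<And>k. 2 \<le> k \<Longrightarrow> k \<le> Suc m \<Longrightarrow> 0 < r k"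
  shows "(\<Sum>k=1..m. a k * w k + (w (k+1) - r (k+1) * w k) / (r (k+1) * (1 + r (k+1))) * z k)
   = (\<Sum>k=1..m. (a k - z k / (1 + r (k+1)) + (if 2 \<le> k then z (k-1) / (r k * (1 + r k)) else 0)) * w k)
     + (if 1 \<le> m then z m / (r (m+1) * (1 + r (m+1))) else 0) * w (m+1)"
  using assms
proof (induction m)
  case 0 then show ?case by simp
next
  case (Suc m)
  have IH: "(\<Sum>k=1..m. a k * w k + (w (k+1) - r (k+1) * w k) / (r (k+1) * (1 + r (k+1))) * z k)
   = (\<Sum>k=1..m. (a k - z k / (1 + r (k+1)) + (if 2 \<le> k then z (k-1) / (r k * (1 + r k)) else 0)) * w k)
     + (if 1 \<le> m then z m / (r (m+1) * (1 + r (m+1))) else 0) * w (m+1)"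
    using Suc by auto
  have rp: "0 < r (Suc m + 1)" using Suc.prems[of "Suc m + 1"] by simp
  have split: "(w (Suc m + 1) - r (Suc m + 1) * w (Suc m)) / (r (Suc m + 1) * (1 + r (Suc m + 1))) * z (Suc m)
      = w (Suc m + 1) * z (Suc m) / (r (Suc m + 1) * (1 + r (Suc m + 1))) - w (Suc m) * z (Suc m) / (1 + r (Suc m + 1))"
  proof -
    obtain R where R: "R = r (Suc m + 1)" by blast
    have Rp: "0 < R" "0 < 1 + R" using R rp by auto
    have "(w (Suc m + 1) - R * w (Suc m)) / (R * (1 + R)) = w (Suc m + 1) / (R * (1 + R)) - w (Suc m) / (1 + R)"
      using Rp by (simp add: diff_divide_distrib)
    then show ?thesis unfolding R[symmetric] by (simp only: left_diff_distrib times_divide_eq_left)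
  qed
  show ?case
    unfolding sum.cl_ivl_Suc IH using split
    by (cases m) (simp_all add: algebra_simps)
qed

lemma ahat_mid:
  assumes "1 \<le> k" "k < n"
  shows "ahat \<alpha> t n (n - k) = acoef \<alpha> t n (n - k) - zeta \<alpha> t n (n - k) / (1 + ratio t (k + 1))
     + (if 2 \<le> k then zeta \<alpha> t n (n - (k - 1)) / (ratio t k * (1 + ratio t k)) else 0)"
proof (cases "k = 1")
  case True
  then show ?thesis unfolding ahat_def using assms by (simp add: numeral_2_eq_2)
next
  case False
  then have k2: "2 \<le> k" using assms by simp
  have j: "n - k \<noteq> 0" "n - k \<noteq> n - 1" using assms k2 by auto
  have e: "n - (n - k) = k" "n - k + 1 = n - (k - 1)" using assms k2 by auto
  show ?thesis unfolding ahat_def using j k2 unfolding e by simp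
qed

lemma caputo_decomp:
  assumes al: "0 < \<alpha>" "\<alpha> < 1" and ms: "mesh t N" and n: "1 \<le> n" "n \<le> N"
  shows "caputoL21 \<alpha> t v n = (\<Sum>k=1..n-1. ahat \<alpha> t n (n - k) * nabla v k)
           + (ahat \<alpha> t n 0 + \<alpha> / (2 - \<alpha>) * acoef \<alpha> t n 0) * nabla v n"
proof -
  obtain m where m: "n = Suc m" using n by (cases n) auto
  have rp: "0 < ratio t k" if "2 \<le> k" "k \<le> Suc m" for k
    using tau_pos[OF ms, of k] tau_pos[OF ms, of "k-1"] that n m unfolding ratio_def by simp
  have D: "(\<Sum>k=1..m. acoef \<alpha> t n (n - k) * nabla v k + (nabla v (k+1) - ratio t (k+1) * nabla v k) / (ratio t (k+1) * (1 + ratio t (k+1))) * zeta \<alpha> t n (n - k))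
     = (\<Sum>k=1..m. (acoef \<alpha> t n (n - k) - zeta \<alpha> t n (n - k) / (1 + ratio t (k+1))
            + (if 2 \<le> k then zeta \<alpha> t n (n - (k-1)) / (ratio t k * (1 + ratio t k)) else 0)) * nabla v k)
       + (if 1 \<le> m then zeta \<alpha> t n (n - m) / (ratio t (m+1) * (1 + ratio t (m+1))) else 0) * nabla v (m+1)"
    using I1gen[where a="\<lambda>k. acoef \<alpha> t n (n - k)" and z="\<lambda>k. zeta \<alpha> t n (n - k)" and r="ratio t" and w="nabla v" and m=m] rp
    by simp
  have S: "(\<Sum>k=1..m. (acoef \<alpha> t n (n - k) - zeta \<alpha> t n (n - k) / (1 + ratio t (k+1))
            + (if 2 \<le> k then zeta \<alpha> t n (n - (k-1)) / (ratio t k * (1 + ratio t k)) else 0)) * nabla v k)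
      = (\<Sum>k=1..m. ahat \<alpha> t n (n - k) * nabla v k)"
    by (intro sum.cong refl) (use ahat_mid[of _ n \<alpha> t] m in auto)
  have top: "ahat \<alpha> t n 0 = 2 * (1 - \<alpha>) / (2 - \<alpha>) * acoef \<alpha> t n 0
      + (if 1 \<le> m then zeta \<alpha> t n (n - m) / (ratio t (m+1) * (1 + ratio t (m+1))) else 0)"
    unfolding ahat_def using m by auto
  have f: "acoef \<alpha> t n 0 = 2 * (1 - \<alpha>) / (2 - \<alpha>) * acoef \<alpha> t n 0 + \<alpha> / (2 - \<alpha>) * acoef \<alpha> t n 0"
  proof -
    have "2 - \<alpha> \<noteq> 0" using al by simp
    have "2 * (1 - \<alpha>) / (2 - \<alpha>) + \<alpha> / (2 - \<alpha>) = (2 * (1 - \<alpha>) + \<alpha>) / (2 - \<alpha>)"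
      by (rule add_divide_distrib[symmetric])
    also have "2 * (1 - \<alpha>) + \<alpha> = 2 - \<alpha>" by simp
    finally have "2 * (1 - \<alpha>) / (2 - \<alpha>) + \<alpha> / (2 - \<alpha>) = 1" using \<open>2 - \<alpha> \<noteq> 0\<close> by simp
    then show ?thesis by (metis distrib_right mult_1)
  qed
  have "caputoL21 \<alpha> t v n = acoef \<alpha> t n 0 * nabla v n
     + (\<Sum>k=1..m. acoef \<alpha> t n (n - k) * nabla v k + (nabla v (k+1) - ratio t (k+1) * nabla v k) / (ratio t (k+1) * (1 + ratio t (k+1))) * zeta \<alpha> t n (n - k))"
    unfolding caputoL21_def using m by simp
  also have "\<dots> = (\<Sum>k=1..m. ahat \<alpha> t n (n - k) * nabla v k) + (ahat \<alpha> t n 0 + \<alpha> / (2 - \<alpha>) * acoef \<alpha> t n 0) * nabla v n"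
  proof -
    define X where "X = 2 * (1 - \<alpha>) / (2 - \<alpha>) * acoef \<alpha> t n 0"
    define Y where "Y = \<alpha> / (2 - \<alpha>) * acoef \<alpha> t n 0"
    define Z where "Z = (if 1 \<le> m then zeta \<alpha> t n (n - m) / (ratio t (m+1) * (1 + ratio t (m+1))) else 0)"
    have f': "acoef \<alpha> t n 0 = X + Y" unfolding X_def Y_def using f .
    have t': "ahat \<alpha> t n 0 = X + Z" unfolding X_def Z_def using top .
    have mm: "m + 1 = n" using m by simp
    show ?thesis unfolding D S t' Z_def[symmetric] Y_def[symmetric]
      by (subst (1) f') (simp add: mm m algebra_simps)
  qed
  finally show ?thesis using m by simp
qed

theorem theorem2p3:
  fixes \<alpha> T :: real and t v :: "nat \<Rightarrow> real" and N n :: nat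
  assumes "0 < \<alpha>" "\<alpha> < 1"
    and "t 0 = 0" "\<forall>k\<in>{1..N}. t (k - 1) < t k" "t N = T"
    and "\<forall>k\<in>{2..N}. ratio t k \<ge> rstar \<alpha>"
    and "1 \<le> n" "n \<le> N"
  shows "2 * nabla v n * caputoL21 \<alpha> t v n
           = Gfun \<alpha> t n (nabla v) - Gfun \<alpha> t (n - 1) (nabla v) + Rfun \<alpha> t n (nabla v)
             + 2 * \<alpha> * acoef \<alpha> t n 0 / (2 - \<alpha>) * (nabla v n)^2
         \<and> Gfun \<alpha> t n (nabla v) \<ge> 0 \<and> Rfun \<alpha> t n (nabla v) \<ge> 0"
proof -
  have al: "0 < \<alpha>" "\<alpha> < 1" using assms by auto
  have ms: "mesh t N" unfolding mesh_def using assms by simp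
  have rat: "\<forall>k\<in>{2..N}. rstar \<alpha> \<le> ratio t k" using assms by simp
  have n: "1 \<le> n" "n \<le> N" using assms by auto
  obtain m where m: "n = Suc m" using n by (cases n) auto
  define w where "w = nabla v"
  have I: "Gfun \<alpha> t n w - Gfun \<alpha> t (n - 1) w + Rfun \<alpha> t n w
      = 2 * w n * (\<Sum>k = 1..m. Akern \<alpha> t n (n - k) * w k) + Akern \<alpha> t n 0 * (w n)^2"
    unfolding Gfun_GG Rfun_RR using I2[of "Akern \<alpha> t n" m w "Akern \<alpha> t m"] m by simp
  have K: "(\<Sum>k = 1..m. Akern \<alpha> t n (n - k) * w k) = (\<Sum>k = 1..m. ahat \<alpha> t n (n - k) * w k)"
    by (intro sum.cong refl) (auto simp: Akern_def m)
  have K0: "Akern \<alpha> t n 0 = 2 * ahat \<alpha> t n 0" unfolding Akern_def by simp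
  have C: "caputoL21 \<alpha> t v n = (\<Sum>k=1..m. ahat \<alpha> t n (n - k) * w k)
           + (ahat \<alpha> t n 0 + \<alpha> / (2 - \<alpha>) * acoef \<alpha> t n 0) * w n"
    using caputo_decomp[OF al ms n, of v] m unfolding w_def by simp
  have "2 * \<alpha> * acoef \<alpha> t n 0 / (2 - \<alpha>) = 2 * (\<alpha> / (2 - \<alpha>) * acoef \<alpha> t n 0)" by simp
  then have eq: "2 * w n * caputoL21 \<alpha> t v n
           = Gfun \<alpha> t n w - Gfun \<alpha> t (n - 1) w + Rfun \<alpha> t n w
             + 2 * \<alpha> * acoef \<alpha> t n 0 / (2 - \<alpha>) * (w n)^2"
    unfolding I K K0 C by (simp add: algebra_simps power2_eq_square)
  have G: "0 \<le> Gfun \<alpha> t n w"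
  proof -
    have "0 \<le> (Akern \<alpha> t n (n - j - 1) - Akern \<alpha> t n (n - j)) * (\<Sum>l = j + 1..n. w l)^2" if j: "j \<in> {1..n-1}" for j
    proof -
      have "Akern \<alpha> t n (n - j) \<le> Akern \<alpha> t n (n - j - 1)"
      proof (cases "j = n - 1")
        case True
        then have "n - j - 1 = 0" "n - j = 1" "2 \<le> n" using j by auto
        then show ?thesis using G_top[OF al ms rat, of n] n by simp
      next
        case False
        then have "2 \<le> j + 1" "j + 1 \<le> n - 1" using j by auto
        from G_mid[OF al ms rat n(2) this] show ?thesis by (simp add: diff_diff_add)
      qed
      then show ?thesis by simp
    qed
    then have "0 \<le> (\<Sum>j = 1..n - 1. (Akern \<alpha> t n (n - j - 1) - Akern \<alpha> t n (n - j)) * (\<Sum>l = j + 1..n. w l)^2)"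
      by (intro sum_nonneg) auto
    moreover have "0 \<le> Akern \<alpha> t n (n - 1) * (\<Sum>l = 1..n. w l)^2" using G_pos[OF al ms rat n] by simp
    ultimately show ?thesis unfolding Gfun_def using n by simp
  qed
  have R: "0 \<le> Rfun \<alpha> t n w"
  proof (cases "n \<le> 1")
    case True then show ?thesis unfolding Rfun_def by simp
  next
    case False
    then have n2: "2 \<le> n" by simp
    have "0 \<le> (Akern \<alpha> t (n - 1) (n - j - 2) - Akern \<alpha> t (n - 1) (n - j - 1) - Akern \<alpha> t n (n - j - 1) + Akern \<alpha> t n (n - j))
            * (\<Sum>l = j + 1..n - 1. w l)^2" if j: "j \<in> {1..n-1}" for j
    proof (cases "j = n - 1")
      case True
      then have "(\<Sum>l = j + 1..n - 1. w l) = 0" using n2 by simp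
      then show ?thesis by simp
    next
      case False
      have "0 \<le> Akern \<alpha> t (n - 1) (n - j - 2) - Akern \<alpha> t (n - 1) (n - j - 1) - Akern \<alpha> t n (n - j - 1) + Akern \<alpha> t n (n - j)"
      proof (cases "j = n - 2")
        case True
        then have e: "n - j - 2 = 0" "n - j - 1 = 1" "n - j = 2" "3 \<le> n" using j False by auto
        show ?thesis using R_top[OF al ms rat e(4) n(2)] unfolding e(1,2,3) by simp
      next
        case False2: False
        then have kk: "2 \<le> j + 1" "j + 1 \<le> n - 2" using j False by auto
        have e: "n - 1 - (j + 1) = n - j - 2" "n - 1 - (j + 1 - 1) = n - j - 1" "n - (j + 1) = n - j - 1" "n - (j + 1 - 1) = n - j"
          by auto
        show ?thesis using R_mid[OF al ms rat n(2) kk] unfolding e by simp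
      qed
      then show ?thesis by simp
    qed
    then have "0 \<le> (\<Sum>j = 1..n - 1. (Akern \<alpha> t (n - 1) (n - j - 2) - Akern \<alpha> t (n - 1) (n - j - 1) - Akern \<alpha> t n (n - j - 1) + Akern \<alpha> t n (n - j))
            * (\<Sum>l = j + 1..n - 1. w l)^2)"
      by (intro sum_nonneg) auto
    moreover have "0 \<le> (Akern \<alpha> t (n - 1) (n - 2) - Akern \<alpha> t n (n - 1)) * (\<Sum>l = 1..n - 1. w l)^2"
      using R_last[OF al ms rat n2 n(2)] by simp
    ultimately show ?thesis unfolding Rfun_def using False by simp
  qed
  show ?thesis using eq G R unfolding w_def by simp
qed


end
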